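(* For every bi-separated graph with distinguished subsets $\dot E=(E,(C,S),(D,T))$, the natural $K$-algebra homomorphism from the path algebra $K(E)$ to $\mathcal A_K(\dot E)$ (sending each vertex and edge to its class) is injective.
   Context: $K$ is a field. A graph $E=(E^0,E^1,r,s)$; its path algebra $K(E)$ is the free $K$-algebra on $E^0\cup E^1$ modulo $vw=\delta_{vw}v$ and $s(e)e=e=er(e)$. A bi-separated graph with distinguished subsets is $\dot E=(E,(C,S),(D,T))$ where $C=\bigsqcup_v C_v$, $C_v$ a partition of $s^{-1}(v)$ into nonempty sets for each non-sink $v$; $D=\bigsqcup_v D_v$, $D_v$ a partition of $r^{-1}(v)$ for each non-source $v$; $|X\cap Y|\le1$ for $X\in C,Y\in D$; $S\subseteq C_{\rm fin}=\{X\in C:|X|<\infty\}$, $T\subseteq D_{\rm fin}=\{Y\in D:|Y|<\infty\}$. For $X\in C$, $s(X)$ is the common source of its edges; for $Y\in D$, $r(Y)$ the common range; $XY=YX$ is the unique edge of $X\cap Y$ if nonempty, else $0$. The double graph $\widehat E$ adds edges $e^*$ with $s(e^* )=r(e)$, $r(e^* )=s(e)$, and $K(\widehat E)$ is its path algebra. The Cohn–Leavitt path algebra $\mathcal A_K(\dot E)$ is the quotient of $K(\widehat E)$ by: for all $X,X'\in S$, $\sum_{Y\in D}(XY)(YX')^*=\delta_{X,X'}s(X)$; for all $Y,Y'\in T$, $\sum_{X\in C}(YX)^*(XY')=\delta_{Y,Y'}r(Y)$ (with $0^*=0$). *)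

theory Defs
  imports Main
begin

text \<open>An element of the free K-algebra on an alphabet of generators is a finitely
supported function from words (lists of generators) to K.\<close>

definition fa_zero :: "'g list \<Rightarrow> 'k::field" where
  "fa_zero = (\<lambda>w. 0)"

definition fa_add :: "('g list \<Rightarrow> 'k::field) \<Rightarrow> ('g list \<Rightarrow> 'k) \<Rightarrow> ('g list \<Rightarrow> 'k)" where
  "fa_add p q = (\<lambda>w. p w + q w)"

definition fa_diff :: "('g list \<Rightarrow> 'k::field) \<Rightarrow> ('g list \<Rightarrow> 'k) \<Rightarrow> ('g list \<Rightarrow> 'k)" where
  "fa_diff p q = (\<lambda>w. p w - q w)"

definition fa_smult :: "'k::field \<Rightarrow> ('g list \<Rightarrow> 'k) \<Rightarrow> ('g list \<Rightarrow> 'k)" where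
  "fa_smult c p = (\<lambda>w. c * p w)"

definition fa_mult :: "('g list \<Rightarrow> 'k::field) \<Rightarrow> ('g list \<Rightarrow> 'k) \<Rightarrow> ('g list \<Rightarrow> 'k)" where
  "fa_mult p q = (\<lambda>w. \<Sum>i\<le>length w. p (take i w) * q (drop i w))"

definition fa_sum :: "('a \<Rightarrow> 'g list \<Rightarrow> 'k::field) \<Rightarrow> 'a set \<Rightarrow> ('g list \<Rightarrow> 'k)" where
  "fa_sum F A = (\<lambda>w. \<Sum>a\<in>A. F a w)"

definition fa_mono :: "'g list \<Rightarrow> ('g list \<Rightarrow> 'k::field)" where
  "fa_mono u = (\<lambda>w. if w = u then 1 else 0)"

definition fa_gen :: "'g \<Rightarrow> ('g list \<Rightarrow> 'k::field)" where
  "fa_gen x = fa_mono [x]"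

definition fa_elem :: "'g set \<Rightarrow> ('g list \<Rightarrow> 'k::field) \<Rightarrow> bool" where
  "fa_elem A p \<longleftrightarrow> finite {w. p w \<noteq> 0} \<and> (\<forall>w. p w \<noteq> 0 \<longrightarrow> w \<in> lists A)"

inductive_set fa_ideal :: "'g set \<Rightarrow> ('g list \<Rightarrow> 'k::field) set \<Rightarrow> ('g list \<Rightarrow> 'k) set"
  for A :: "'g set" and R :: "('g list \<Rightarrow> 'k) set" where
  zero: "fa_zero \<in> fa_ideal A R"
| gen: "r \<in> R \<Longrightarrow> u \<in> lists A \<Longrightarrow> w \<in> lists A \<Longrightarrow>
          fa_mult (fa_mult (fa_mono u) r) (fa_mono w) \<in> fa_ideal A R"
| add: "x \<in> fa_ideal A R \<Longrightarrow> y \<in> fa_ideal A R \<Longrightarrow> fa_add x y \<in> fa_ideal A R"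
| smult: "x \<in> fa_ideal A R \<Longrightarrow> fa_smult c x \<in> fa_ideal A R"

section \<open>Generators: vertices, edges, ghost edges e*\<close>

datatype ('v, 'e) gen = V 'v | Ed 'e | Gh 'e

definition is_graph :: "'v set \<Rightarrow> 'e set \<Rightarrow> ('e \<Rightarrow> 'v) \<Rightarrow> ('e \<Rightarrow> 'v) \<Rightarrow> bool" where
  "is_graph E0 E1 r s \<longleftrightarrow> (\<forall>e\<in>E1. r e \<in> E0 \<and> s e \<in> E0)"

definition path_alph :: "'v set \<Rightarrow> 'e set \<Rightarrow> ('v, 'e) gen set" where
  "path_alph E0 E1 = V ` E0 \<union> Ed ` E1"

definition dbl_alph :: "'v set \<Rightarrow> 'e set \<Rightarrow> ('v, 'e) gen set" where
  "dbl_alph E0 E1 = V ` E0 \<union> Ed ` E1 \<union> Gh ` E1"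

definition path_rels :: "'v set \<Rightarrow> 'e set \<Rightarrow> ('e \<Rightarrow> 'v) \<Rightarrow> ('e \<Rightarrow> 'v)
    \<Rightarrow> (('v, 'e) gen list \<Rightarrow> 'k::field) set" where
  "path_rels E0 E1 r s =
     {fa_diff (fa_mult (fa_gen (V v)) (fa_gen (V w))) (if v = w then fa_gen (V v) else fa_zero)
        | v w. v \<in> E0 \<and> w \<in> E0}
   \<union> {fa_diff (fa_mult (fa_gen (V (s e))) (fa_gen (Ed e))) (fa_gen (Ed e)) | e. e \<in> E1}
   \<union> {fa_diff (fa_mult (fa_gen (Ed e)) (fa_gen (V (r e)))) (fa_gen (Ed e)) | e. e \<in> E1}"

text \<open>Additional relations for the ghost edges of the double graph:
  s(e*) = r(e), r(e*) = s(e).\<close>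
definition ghost_rels :: "'v set \<Rightarrow> 'e set \<Rightarrow> ('e \<Rightarrow> 'v) \<Rightarrow> ('e \<Rightarrow> 'v)
    \<Rightarrow> (('v, 'e) gen list \<Rightarrow> 'k::field) set" where
  "ghost_rels E0 E1 r s =
     {fa_diff (fa_mult (fa_gen (V (r e))) (fa_gen (Gh e))) (fa_gen (Gh e)) | e. e \<in> E1}
   \<union> {fa_diff (fa_mult (fa_gen (Gh e)) (fa_gen (V (s e)))) (fa_gen (Gh e)) | e. e \<in> E1}"

definition is_partition :: "'a set set \<Rightarrow> 'a set \<Rightarrow> bool" where
  "is_partition P A \<longleftrightarrow> (\<forall>X\<in>P. X \<noteq> {}) \<and> \<Union>P = A \<and> (\<forall>X\<in>P. \<forall>Y\<in>P. X \<noteq> Y \<longrightarrow> X \<inter> Y = {})"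

definition non_sinks :: "'v set \<Rightarrow> 'e set \<Rightarrow> ('e \<Rightarrow> 'v) \<Rightarrow> 'v set" where
  "non_sinks E0 E1 s = {v \<in> E0. \<exists>e\<in>E1. s e = v}"

definition non_sources :: "'v set \<Rightarrow> 'e set \<Rightarrow> ('e \<Rightarrow> 'v) \<Rightarrow> 'v set" where
  "non_sources E0 E1 r = {v \<in> E0. \<exists>e\<in>E1. r e = v}"

definition bisep_C :: "'v set \<Rightarrow> 'e set \<Rightarrow> ('e \<Rightarrow> 'v) \<Rightarrow> ('v \<Rightarrow> 'e set set) \<Rightarrow> 'e set set" where
  "bisep_C E0 E1 s Cv = (\<Union>v\<in>non_sinks E0 E1 s. Cv v)"

definition bisep_D :: "'v set \<Rightarrow> 'e set \<Rightarrow> ('e \<Rightarrow> 'v) \<Rightarrow> ('v \<Rightarrow> 'e set set) \<Rightarrow> 'e set set" where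
  "bisep_D E0 E1 r Dv = (\<Union>v\<in>non_sources E0 E1 r. Dv v)"

definition is_bisep :: "'v set \<Rightarrow> 'e set \<Rightarrow> ('e \<Rightarrow> 'v) \<Rightarrow> ('e \<Rightarrow> 'v)
    \<Rightarrow> ('v \<Rightarrow> 'e set set) \<Rightarrow> ('v \<Rightarrow> 'e set set) \<Rightarrow> 'e set set \<Rightarrow> 'e set set \<Rightarrow> bool" where
  "is_bisep E0 E1 r s Cv Dv S T \<longleftrightarrow>
     is_graph E0 E1 r s
   \<and> (\<forall>v\<in>non_sinks E0 E1 s. is_partition (Cv v) {e \<in> E1. s e = v})
   \<and> (\<forall>v\<in>non_sources E0 E1 r. is_partition (Dv v) {e \<in> E1. r e = v})
   \<and> (\<forall>X\<in>bisep_C E0 E1 s Cv. \<forall>Y\<in>bisep_D E0 E1 r Dv.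
        \<forall>e f. e \<in> X \<inter> Y \<longrightarrow> f \<in> X \<inter> Y \<longrightarrow> e = f)
   \<and> S \<subseteq> {X \<in> bisep_C E0 E1 s Cv. finite X}
   \<and> T \<subseteq> {Y \<in> bisep_D E0 E1 r Dv. finite Y}"

text \<open>XY = YX: the unique edge in X \<inter> Y (as element of the free algebra), or 0.
  ghost X Y is (XY)^*, with 0^* = 0.\<close>
definition edge_XY :: "'e set \<Rightarrow> 'e set \<Rightarrow> (('v, 'e) gen list \<Rightarrow> 'k::field)" where
  "edge_XY X Y = (if X \<inter> Y = {} then fa_zero else fa_gen (Ed (the_elem (X \<inter> Y))))"

definition ghost_XY :: "'e set \<Rightarrow> 'e set \<Rightarrow> (('v, 'e) gen list \<Rightarrow> 'k::field)" where
  "ghost_XY X Y = (if X \<inter> Y = {} then fa_zero else fa_gen (Gh (the_elem (X \<inter> Y))))"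

definition src_set :: "('e \<Rightarrow> 'v) \<Rightarrow> 'e set \<Rightarrow> 'v" where
  "src_set s X = s (SOME e. e \<in> X)"

definition rng_set :: "('e \<Rightarrow> 'v) \<Rightarrow> 'e set \<Rightarrow> 'v" where
  "rng_set r Y = r (SOME e. e \<in> Y)"

text \<open>The sums over Y in D (resp. X in C) are restricted to the
  terms that can be nonzero, i.e. Y meeting X (resp. X meeting Y); these index sets are
  finite since X \<in> S (resp. Y \<in> T) is finite.\<close>
definition CL_rels :: "'v set \<Rightarrow> 'e set \<Rightarrow> ('e \<Rightarrow> 'v) \<Rightarrow> ('e \<Rightarrow> 'v)
    \<Rightarrow> ('v \<Rightarrow> 'e set set) \<Rightarrow> ('v \<Rightarrow> 'e set set) \<Rightarrow> 'e set set \<Rightarrow> 'e set set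
    \<Rightarrow> (('v, 'e) gen list \<Rightarrow> 'k::field) set" where
  "CL_rels E0 E1 r s Cv Dv S T =
     {fa_diff
        (fa_sum (\<lambda>Y. fa_mult (edge_XY X Y) (ghost_XY Y X')) {Y \<in> bisep_D E0 E1 r Dv. X \<inter> Y \<noteq> {}})
        (if X = X' then fa_gen (V (src_set s X)) else fa_zero)
      | X X'. X \<in> S \<and> X' \<in> S}
   \<union> {fa_diff
        (fa_sum (\<lambda>X. fa_mult (ghost_XY Y X) (edge_XY X Y')) {X \<in> bisep_C E0 E1 s Cv. Y \<inter> X \<noteq> {}})
        (if Y = Y' then fa_gen (V (rng_set r Y)) else fa_zero)
      | Y Y'. Y \<in> T \<and> Y' \<in> T}"

end

theory Submission
  imports Defs
begin

lemma mult_mono_left: "fa_mult (fa_mono u) q = (\<lambda>z. if take (length u) z = u then q (drop (length u) z) else 0)"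
proof (rule ext)
  fix z :: "'a list"
  show "fa_mult (fa_mono u) q z = (if take (length u) z = u then q (drop (length u) z) else 0)"
  proof (cases "take (length u) z = u")
    case True
    hence le: "length u \<le> length z" by (metis length_take min.absorb_iff1 min.commute nat_le_linear)
    have "\<forall>i\<in>{..length z}. fa_mono u (take i z) * q (drop i z) = (if i = length u then q (drop (length u) z) else 0)"
      using True by (auto simp: fa_mono_def)
    hence "fa_mult (fa_mono u) q z = (\<Sum>i\<le>length z. (if i = length u then q (drop (length u) z) else 0))"
      unfolding fa_mult_def by (intro sum.cong refl) blast
    also have "\<dots> = q (drop (length u) z)" using le by simp
    finally show ?thesis using True by simp
  next
    case False
    have "\<forall>i\<in>{..length z}. fa_mono u (take i z) * q (drop i z) = 0"
      using False by (auto simp: fa_mono_def)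
    hence "fa_mult (fa_mono u) q z = 0" unfolding fa_mult_def by (intro sum.neutral) blast
    thus ?thesis using False by simp
  qed
qed

lemma mult_mono_right: "fa_mult q (fa_mono w) = (\<lambda>z. if length w \<le> length z \<and> drop (length z - length w) z = w then q (take (length z - length w) z) else 0)"
proof (rule ext)
  fix z :: "'a list"
  show "fa_mult q (fa_mono w) z = (if length w \<le> length z \<and> drop (length z - length w) z = w then q (take (length z - length w) z) else 0)"
  proof (cases "length w \<le> length z \<and> drop (length z - length w) z = w")
    case True
    have "\<forall>i\<in>{..length z}. q (take i z) * fa_mono w (drop i z) = (if i = length z - length w then q (take (length z - length w) z) else 0)"
      using True by (auto simp: fa_mono_def)
    hence "fa_mult q (fa_mono w) z = (\<Sum>i\<le>length z. (if i = length z - length w then q (take (length z - length w) z) else 0))"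
      unfolding fa_mult_def by (intro sum.cong refl) blast
    also have "\<dots> = q (take (length z - length w) z)" by simp
    finally show ?thesis using True by simp
  next
    case False
    have "\<forall>i\<in>{..length z}. q (take i z) * fa_mono w (drop i z) = 0"
      using False by (auto simp: fa_mono_def)
    hence "fa_mult q (fa_mono w) z = 0" unfolding fa_mult_def by (intro sum.neutral) blast
    thus ?thesis using False by auto
  qed
qed

definition ctx :: "'g list \<Rightarrow> ('g list \<Rightarrow> 'k::field) \<Rightarrow> 'g list \<Rightarrow> 'g list \<Rightarrow> 'k" where
  "ctx u q w = fa_mult (fa_mult (fa_mono u) q) (fa_mono w)"

lemma ctx_app[simp]: "ctx u q w (u @ y @ w) = q y"
  by (simp add: ctx_def mult_mono_left mult_mono_right)

lemma ctx_other: assumes "\<forall>y. z \<noteq> u @ y @ w" shows "ctx u q w z = 0"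
proof -
  { assume c: "length w \<le> length z" "drop (length z - length w) z = w"
       "take (length u) (take (length z - length w) z) = u"
    let ?z' = "take (length z - length w) z"
    have "z = ?z' @ w" using c by (metis append_take_drop_id)
    moreover have "?z' = u @ drop (length u) ?z'" using c(3) by (metis append_take_drop_id)
    ultimately have False using assms by (metis append.assoc) }
  thus ?thesis by (auto simp: ctx_def mult_mono_left mult_mono_right)
qed

lemma ctx_ctx: "ctx u (ctx u' q w') w = ctx (u @ u') q (w' @ w)"
proof (rule ext)
  fix z
  show "ctx u (ctx u' q w') w z = ctx (u @ u') q (w' @ w) z"
  proof (cases "\<exists>y. z = u @ y @ w")
    case True
    then obtain y where y: "z = u @ y @ w" by blast
    show ?thesis
    proof (cases "\<exists>x. y = u' @ x @ w'")
      case True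
      then obtain x where "y = u' @ x @ w'" by blast
      hence e1: "z = u @ (u' @ x @ w') @ w" and e2: "z = (u @ u') @ x @ (w' @ w)" using y by simp_all
      have "ctx u (ctx u' q w') w z = q x" unfolding e1 ctx_app by simp
      moreover have "ctx (u @ u') q (w' @ w) z = q x" unfolding e2 ctx_app by simp
      ultimately show ?thesis by simp
    next
      case False
      hence "\<forall>x. z \<noteq> (u @ u') @ x @ (w' @ w)" using y by auto
      thus ?thesis using y False by (simp add: ctx_other)
    qed
  next
    case False
    hence "\<forall>x. z \<noteq> (u @ u') @ x @ (w' @ w)" by (metis append.assoc)
    thus ?thesis using False by (simp add: ctx_other)
  qed
qed

lemma ctx_ext: assumes "\<And>y. f (u @ y @ w) = g (u @ y @ w)" "\<And>z. \<forall>y. z \<noteq> u @ y @ w \<Longrightarrow> f z = g z"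
  shows "f = g"
proof (rule ext)
  fix z show "f z = g z"
  proof (cases "\<exists>y. z = u @ y @ w")
    case True then obtain y where "z = u @ y @ w" by blast
    thus ?thesis using assms(1) by simp
  next
    case False thus ?thesis using assms(2) by blast
  qed
qed

lemma ctx_lin: 
  "ctx u (fa_add a b) w = fa_add (ctx u a w) (ctx u b w)"
  "ctx u (fa_smult c a) w = fa_smult c (ctx u a w)"
  "ctx u (fa_diff a b) w = fa_diff (ctx u a w) (ctx u b w)"
  "ctx u fa_zero w = fa_zero"
  "ctx u (fa_mono x) w = fa_mono (u @ x @ w)"
proof -
  show "ctx u (fa_add a b) w = fa_add (ctx u a w) (ctx u b w)"
    by (rule ctx_ext[of _ u w]) (simp_all add: ctx_other fa_add_def)
  show "ctx u (fa_smult c a) w = fa_smult c (ctx u a w)"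
    by (rule ctx_ext[of _ u w]) (simp_all add: ctx_other fa_smult_def)
  show "ctx u (fa_diff a b) w = fa_diff (ctx u a w) (ctx u b w)"
    by (rule ctx_ext[of _ u w]) (simp_all add: ctx_other fa_diff_def)
  show "ctx u fa_zero w = fa_zero"
    by (rule ctx_ext[of _ u w]) (simp_all add: ctx_other fa_zero_def)
  show "ctx u (fa_mono x) w = fa_mono (u @ x @ w)"
    by (rule ctx_ext[of _ u w]) (auto simp add: ctx_other fa_mono_def)
qed

lemma gen_mono: "fa_gen x = fa_mono [x]" by (simp add: fa_gen_def)

lemma mult_unit_right: "fa_mult q (fa_mono []) = q"
  by (simp add: mult_mono_right)

lemma mono_mult: "fa_mult (fa_mono a) (fa_mono b) = fa_mono (a @ b)"
  using ctx_lin(5)[of a b "[]"] by (simp add: ctx_def mult_unit_right)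

lemma zero_mult1: "fa_mult fa_zero q = fa_zero"
  unfolding fa_mult_def fa_zero_def by simp

lemma zero_mult2: "fa_mult q fa_zero = fa_zero"
  unfolding fa_mult_def fa_zero_def by simp

lemma ideal_gen: "r \<in> R \<Longrightarrow> u \<in> lists A \<Longrightarrow> w \<in> lists A \<Longrightarrow> ctx u r w \<in> fa_ideal A R"
  unfolding ctx_def by (rule fa_ideal.gen)

lemma ideal_ctx: "x \<in> fa_ideal A R \<Longrightarrow> u \<in> lists A \<Longrightarrow> w \<in> lists A \<Longrightarrow> ctx u x w \<in> fa_ideal A R"
proof (induction x rule: fa_ideal.induct)
  case zero thus ?case by (simp add: ctx_lin fa_ideal.zero)
next
  case (gen r u' w')
  have "ctx u (ctx u' r w') w \<in> fa_ideal A R" using gen by (simp add: ctx_ctx ideal_gen)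
  thus ?case by (simp add: ctx_def)
next
  case (add x y) thus ?case by (simp add: ctx_lin fa_ideal.add)
next
  case (smult x c) thus ?case by (simp add: ctx_lin fa_ideal.smult)
qed

lemma ideal_diff: "x \<in> fa_ideal A R \<Longrightarrow> y \<in> fa_ideal A R \<Longrightarrow> fa_diff x y \<in> fa_ideal A R"
proof -
  assume "x \<in> fa_ideal A R" "y \<in> fa_ideal A R"
  hence "fa_add x (fa_smult (-1) y) \<in> fa_ideal A R" by (intro fa_ideal.add fa_ideal.smult)
  moreover have "fa_add x (fa_smult (-1) y) = fa_diff x y" by (auto simp: fa_add_def fa_smult_def fa_diff_def)
  ultimately show ?thesis by simp
qed

lemma ideal_sum: "finite B \<Longrightarrow> (\<And>a. a \<in> B \<Longrightarrow> F a \<in> fa_ideal A R) \<Longrightarrow> fa_sum F B \<in> fa_ideal A R"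
proof (induction B rule: finite_induct)
  case empty
  have "fa_sum F {} = fa_zero" by (simp add: fa_sum_def fa_zero_def)
  thus ?case by (simp add: fa_ideal.zero)
next
  case (insert a B)
  have "fa_sum F (insert a B) = fa_add (F a) (fa_sum F B)" using insert by (auto simp: fa_sum_def fa_add_def)
  thus ?case using insert by (simp add: fa_ideal.add)
qed

lemma ideal_mono: "x \<in> fa_ideal A R \<Longrightarrow> A \<subseteq> A' \<Longrightarrow> R \<subseteq> R' \<Longrightarrow> x \<in> fa_ideal A' R'"
proof (induction x rule: fa_ideal.induct)
  case zero show ?case by (rule fa_ideal.zero)
next
  case (gen r u w) thus ?case using lists_mono by (blast intro: fa_ideal.gen)
next
  case (add x y) thus ?case by (blast intro: fa_ideal.add)
next
  case (smult x c) thus ?case by (blast intro: fa_ideal.smult)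
qed

definition eqv :: "'g set \<Rightarrow> ('g list \<Rightarrow> 'k::field) set \<Rightarrow> ('g list \<Rightarrow> 'k) \<Rightarrow> ('g list \<Rightarrow> 'k) \<Rightarrow> bool" where
  "eqv A R a b \<longleftrightarrow> fa_diff a b \<in> fa_ideal A R"

lemma eqv_refl: "eqv A R a a"
proof -
  have "fa_diff a a = fa_zero" by (auto simp: fa_diff_def fa_zero_def)
  thus ?thesis by (simp add: eqv_def fa_ideal.zero)
qed

lemma eqv_sym: "eqv A R a b \<Longrightarrow> eqv A R b a"
proof -
  assume "eqv A R a b"
  hence "fa_smult (-1) (fa_diff a b) \<in> fa_ideal A R" by (simp add: eqv_def fa_ideal.smult)
  moreover have "fa_smult (-1) (fa_diff a b) = fa_diff b a" by (auto simp: fa_smult_def fa_diff_def)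
  ultimately show ?thesis by (simp add: eqv_def)
qed

lemma eqv_trans: "eqv A R a b \<Longrightarrow> eqv A R b c \<Longrightarrow> eqv A R a c"
proof -
  assume "eqv A R a b" "eqv A R b c"
  hence "fa_add (fa_diff a b) (fa_diff b c) \<in> fa_ideal A R" by (simp add: eqv_def fa_ideal.add)
  moreover have "fa_add (fa_diff a b) (fa_diff b c) = fa_diff a c" by (auto simp: fa_add_def fa_diff_def)
  ultimately show ?thesis by (simp add: eqv_def)
qed

lemma eqv_ctx: "eqv A R a b \<Longrightarrow> u \<in> lists A \<Longrightarrow> w \<in> lists A \<Longrightarrow> eqv A R (ctx u a w) (ctx u b w)"
proof -
  assume a: "eqv A R a b" "u \<in> lists A" "w \<in> lists A"
  have "ctx u (fa_diff a b) w \<in> fa_ideal A R" using a unfolding eqv_def by (intro ideal_ctx)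
  thus ?thesis by (simp add: ctx_lin eqv_def)
qed

lemma eqv_rel: "fa_diff (fa_mono x) (fa_mono y) \<in> R \<Longrightarrow> u \<in> lists A \<Longrightarrow> w \<in> lists A \<Longrightarrow>
   eqv A R (fa_mono (u @ x @ w)) (fa_mono (u @ y @ w))"
proof -
  assume a: "fa_diff (fa_mono x) (fa_mono y) \<in> R" "u \<in> lists A" "w \<in> lists A"
  have "ctx u (fa_diff (fa_mono x) (fa_mono y)) w \<in> fa_ideal A R" using a by (intro ideal_gen)
  thus ?thesis by (simp add: ctx_lin eqv_def)
qed

lemma eqv_rel0: "fa_diff (fa_mono x) fa_zero \<in> R \<Longrightarrow> u \<in> lists A \<Longrightarrow> w \<in> lists A \<Longrightarrow>
   eqv A R (fa_mono (u @ x @ w)) fa_zero"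
proof -
  assume a: "fa_diff (fa_mono x) fa_zero \<in> R" "u \<in> lists A" "w \<in> lists A"
  have "ctx u (fa_diff (fa_mono x) fa_zero) w \<in> fa_ideal A R" using a by (intro ideal_gen)
  thus ?thesis by (simp add: ctx_lin eqv_def)
qed

section \<open>Evaluation via a partial action\<close>

definition supp :: "('g list \<Rightarrow> 'k::field) \<Rightarrow> 'g list set" where
  "supp f = {z. f z \<noteq> 0}"

definition ev :: "('g list \<Rightarrow> 'p \<Rightarrow> 'p option) \<Rightarrow> ('g list \<Rightarrow> 'k::field) \<Rightarrow> 'p \<Rightarrow> 'p \<Rightarrow> 'k" where
  "ev act f b c = sum f {z. f z \<noteq> 0 \<and> act z b = Some c}"

lemma ev_eq: assumes "finite F" "supp f \<subseteq> F"
  shows "ev act f b c = sum f {z \<in> F. act z b = Some c}"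
  unfolding ev_def
  by (rule sum.mono_neutral_left) (use assms in \<open>auto simp: supp_def\<close>)

lemma ev_diff: assumes "finite (supp f)" "finite (supp g)"
  shows "ev act (fa_diff f g) b c = ev act f b c - ev act g b c"
proof -
  let ?F = "supp f \<union> supp g"
  have s: "supp (fa_diff f g) \<subseteq> ?F" by (auto simp: supp_def fa_diff_def)
  have fin: "finite ?F" using assms by simp
  have "ev act (fa_diff f g) b c = sum (fa_diff f g) {z \<in> ?F. act z b = Some c}" by (rule ev_eq[OF fin s])
  moreover have "ev act f b c = sum f {z \<in> ?F. act z b = Some c}" by (rule ev_eq[OF fin]) auto
  moreover have "ev act g b c = sum g {z \<in> ?F. act z b = Some c}" by (rule ev_eq[OF fin]) auto
  ultimately show ?thesis by (simp add: fa_diff_def sum_subtractf)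
qed

lemma ev_add: assumes "finite (supp f)" "finite (supp g)"
  shows "ev act (fa_add f g) b c = ev act f b c + ev act g b c"
proof -
  let ?F = "supp f \<union> supp g"
  have s: "supp (fa_add f g) \<subseteq> ?F" by (auto simp: supp_def fa_add_def)
  have fin: "finite ?F" using assms by simp
  have "ev act (fa_add f g) b c = sum (fa_add f g) {z \<in> ?F. act z b = Some c}" by (rule ev_eq[OF fin s])
  moreover have "ev act f b c = sum f {z \<in> ?F. act z b = Some c}" by (rule ev_eq[OF fin]) auto
  moreover have "ev act g b c = sum g {z \<in> ?F. act z b = Some c}" by (rule ev_eq[OF fin]) auto
  ultimately show ?thesis by (simp add: fa_add_def sum.distrib)
qed

lemma ev_smult: assumes "finite (supp f)"
  shows "ev act (fa_smult k f) b c = k * ev act f b c"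
proof -
  have s: "supp (fa_smult k f) \<subseteq> supp f" by (auto simp: supp_def fa_smult_def)
  have "ev act (fa_smult k f) b c = sum (fa_smult k f) {z \<in> supp f. act z b = Some c}" by (rule ev_eq[OF assms s])
  moreover have "ev act f b c = sum f {z \<in> supp f. act z b = Some c}" by (rule ev_eq[OF assms]) auto
  ultimately show ?thesis by (simp add: fa_smult_def sum_distrib_left)
qed

lemma ev_zero: "ev act fa_zero b c = 0" by (simp add: ev_def fa_zero_def)

lemma ev_mono: "ev act (fa_mono z) b c = (if act z b = Some c then 1 else (0::'k::field))"
proof -
  have "{w. (fa_mono z w :: 'k) \<noteq> 0 \<and> act w b = Some c} = (if act z b = Some c then {z} else {})"
    by (auto simp: fa_mono_def)
  thus ?thesis by (simp add: ev_def fa_mono_def)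
qed

lemma supp_mono: "supp (fa_mono z :: _ \<Rightarrow> 'k::field) = {z}" by (auto simp: supp_def fa_mono_def)

lemma ev_sum: assumes "finite B" "\<And>a. a \<in> B \<Longrightarrow> finite (supp (F a))"
  shows "ev act (fa_sum F B) b c = (\<Sum>a\<in>B. ev act (F a) b c)" "finite (supp (fa_sum F B))"
proof -
  let ?F = "\<Union>a\<in>B. supp (F a)"
  have fin: "finite ?F" using assms by auto
  have s: "supp (fa_sum F B) \<subseteq> ?F"
  proof
    fix z assume "z \<in> supp (fa_sum F B)"
    hence "(\<Sum>a\<in>B. F a z) \<noteq> 0" by (simp add: supp_def fa_sum_def)
    then obtain a where "a \<in> B" "F a z \<noteq> 0" by (meson sum.not_neutral_contains_not_neutral)
    thus "z \<in> ?F" by (auto simp: supp_def)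
  qed
  show "finite (supp (fa_sum F B))" using fin s finite_subset by blast
  have "ev act (fa_sum F B) b c = (\<Sum>z\<in>{z \<in> ?F. act z b = Some c}. \<Sum>a\<in>B. F a z)"
    using ev_eq[OF fin s] by (simp add: fa_sum_def)
  also have "\<dots> = (\<Sum>a\<in>B. \<Sum>z\<in>{z \<in> ?F. act z b = Some c}. F a z)" by (rule sum.swap)
  also have "\<dots> = (\<Sum>a\<in>B. ev act (F a) b c)"
  proof (rule sum.cong[OF refl])
    fix a assume "a \<in> B"
    hence "supp (F a) \<subseteq> ?F" by auto
    thus "(\<Sum>z\<in>{z \<in> ?F. act z b = Some c}. F a z) = ev act (F a) b c" by (rule ev_eq[OF fin, symmetric])
  qed
  finally show "ev act (fa_sum F B) b c = (\<Sum>a\<in>B. ev act (F a) b c)" .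
qed

lemma ev_single: assumes "act n b = Some c" "\<And>z. f z \<noteq> 0 \<Longrightarrow> act z b = Some c \<Longrightarrow> z = n"
  shows "ev act f b c = f n"
proof (cases "f n = 0")
  case True
  have "{z. f z \<noteq> 0 \<and> act z b = Some c} = {}" using assms(2) True by blast
  thus ?thesis unfolding ev_def using True by (metis sum.empty)
next
  case False
  have "{z. f z \<noteq> 0 \<and> act z b = Some c} = {n}" using assms False by blast
  thus ?thesis unfolding ev_def by simp
qed



datatype 'e step = Up 'e | Dn 'e
datatype ('v,'e) pt = Junk | P 'v "'e list" nat "'e step list"

locale bisep =
  fixes E0 :: "'v set" and E1 :: "'e set" and r s :: "'e \<Rightarrow> 'v"
    and Cv Dv :: "'v \<Rightarrow> 'e set set" and S T :: "'e set set"
  assumes bis: "is_bisep E0 E1 r s Cv Dv S T"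
begin

abbreviation "CC \<equiv> bisep_C E0 E1 s Cv"
abbreviation "DD \<equiv> bisep_D E0 E1 r Dv"

lemma graph: "e \<in> E1 \<Longrightarrow> r e \<in> E0 \<and> s e \<in> E0"
  using bis unfolding is_bisep_def is_graph_def by blast

lemma part_props: assumes "is_partition PP A" "X \<in> PP"
  shows "X \<noteq> {}" "X \<subseteq> A" "\<And>Y. Y \<in> PP \<Longrightarrow> X \<noteq> Y \<Longrightarrow> X \<inter> Y = {}"
proof -
  have a: "\<forall>X\<in>PP. X \<noteq> {}" "\<Union>PP = A" "\<forall>X\<in>PP. \<forall>Y\<in>PP. X \<noteq> Y \<longrightarrow> X \<inter> Y = {}"
    using assms(1) unfolding is_partition_def by simp_all
  show "X \<noteq> {}" using a(1) assms(2) by simp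
  show "X \<subseteq> A" using a(2) assms(2) Union_upper by metis
  show "\<And>Y. Y \<in> PP \<Longrightarrow> X \<noteq> Y \<Longrightarrow> X \<inter> Y = {}" using a(3) assms(2) by simp
qed

lemma part_cover: assumes "is_partition PP A" "x \<in> A" shows "\<exists>X\<in>PP. x \<in> X"
proof -
  have "\<Union>PP = A" using assms(1) unfolding is_partition_def by simp
  thus ?thesis using assms(2) by auto
qed

lemma C_mem: assumes "X \<in> CC" obtains v where "v \<in> non_sinks E0 E1 s" "X \<in> Cv v" "X \<noteq> {}" "X \<subseteq> {e \<in> E1. s e = v}"
    "is_partition (Cv v) {e \<in> E1. s e = v}"
proof -
  obtain v where v: "v \<in> non_sinks E0 E1 s" "X \<in> Cv v" using assms unfolding bisep_C_def by blast
  have P: "is_partition (Cv v) {e \<in> E1. s e = v}" using bis v(1) unfolding is_bisep_def by simp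
  show ?thesis using that[OF v _ _ P] part_props[OF P v(2)] by simp
qed

lemma D_mem: assumes "Y \<in> DD" obtains v where "v \<in> non_sources E0 E1 r" "Y \<in> Dv v" "Y \<noteq> {}" "Y \<subseteq> {e \<in> E1. r e = v}"
    "is_partition (Dv v) {e \<in> E1. r e = v}"
proof -
  obtain v where v: "v \<in> non_sources E0 E1 r" "Y \<in> Dv v" using assms unfolding bisep_D_def by blast
  have P: "is_partition (Dv v) {e \<in> E1. r e = v}" using bis v(1) unfolding is_bisep_def by simp
  show ?thesis using that[OF v _ _ P] part_props[OF P v(2)] by simp
qed

lemma C_props: assumes "X \<in> CC" shows "X \<noteq> {}" "X \<subseteq> E1" "\<And>e. e \<in> X \<Longrightarrow> s e = src_set s X"
proof -
  obtain v where v: "X \<noteq> {}" "X \<subseteq> {e \<in> E1. s e = v}" using C_mem[OF assms] by blast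
  have "(SOME e. e \<in> X) \<in> X" using v(1) by (simp add: some_in_eq)
  hence "src_set s X = v" using v unfolding src_set_def by blast
  thus "X \<noteq> {}" "X \<subseteq> E1" "\<And>e. e \<in> X \<Longrightarrow> s e = src_set s X" using v by auto
qed

lemma D_props: assumes "Y \<in> DD" shows "Y \<noteq> {}" "Y \<subseteq> E1" "\<And>e. e \<in> Y \<Longrightarrow> r e = rng_set r Y"
proof -
  obtain v where v: "Y \<noteq> {}" "Y \<subseteq> {e \<in> E1. r e = v}" using D_mem[OF assms] by blast
  have "(SOME e. e \<in> Y) \<in> Y" using v(1) by (simp add: some_in_eq)
  hence "rng_set r Y = v" using v unfolding rng_set_def by blast
  thus "Y \<noteq> {}" "Y \<subseteq> E1" "\<And>e. e \<in> Y \<Longrightarrow> r e = rng_set r Y" using v by auto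
qed

lemma C_uniq: assumes "X \<in> CC" "X' \<in> CC" "e \<in> X" "e \<in> X'" shows "X = X'"
proof -
  obtain v where v: "X \<in> Cv v" "X \<subseteq> {e \<in> E1. s e = v}" "is_partition (Cv v) {e \<in> E1. s e = v}"
    using C_mem[OF assms(1)] by blast
  obtain w where w: "X' \<in> Cv w" "X' \<subseteq> {e \<in> E1. s e = w}" using C_mem[OF assms(2)] by blast
  have "v = w" using v w assms by auto
  hence "X' \<in> Cv v" using w by simp
  thus ?thesis using part_props(3)[OF v(3) v(1)] assms(3,4) by blast
qed

lemma D_uniq: assumes "Y \<in> DD" "Y' \<in> DD" "e \<in> Y" "e \<in> Y'" shows "Y = Y'"
proof -
  obtain v where v: "Y \<in> Dv v" "Y \<subseteq> {e \<in> E1. r e = v}" "is_partition (Dv v) {e \<in> E1. r e = v}"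
    using D_mem[OF assms(1)] by blast
  obtain w where w: "Y' \<in> Dv w" "Y' \<subseteq> {e \<in> E1. r e = w}" using D_mem[OF assms(2)] by blast
  have "v = w" using v w assms by auto
  hence "Y' \<in> Dv v" using w by simp
  thus ?thesis using part_props(3)[OF v(3) v(1)] assms(3,4) by blast
qed

lemma CD_one: "X \<in> CC \<Longrightarrow> Y \<in> DD \<Longrightarrow> e \<in> X \<Longrightarrow> e \<in> Y \<Longrightarrow> f \<in> X \<Longrightarrow> f \<in> Y \<Longrightarrow> e = f"
  using bis unfolding is_bisep_def by blast

lemma CD_the: assumes "X \<in> CC" "Y \<in> DD" "e \<in> X" "e \<in> Y" shows "the_elem (X \<inter> Y) = e" "the_elem (Y \<inter> X) = e"
proof -
  have "X \<inter> Y = {e}" using CD_one[OF assms(1,2)] assms by blast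
  thus "the_elem (X \<inter> Y) = e" "the_elem (Y \<inter> X) = e" by (auto simp: Int_commute)
qed

lemma edge_D: assumes "e \<in> E1" shows "\<exists>Y\<in>DD. e \<in> Y"
proof -
  have v: "r e \<in> non_sources E0 E1 r" using assms graph unfolding non_sources_def by blast
  hence "is_partition (Dv (r e)) {f \<in> E1. r f = r e}" using bis unfolding is_bisep_def by simp
  hence "\<exists>Y\<in>Dv (r e). e \<in> Y" using assms part_cover by fastforce
  thus ?thesis using v unfolding bisep_D_def by blast
qed

lemma edge_C: assumes "e \<in> E1" shows "\<exists>X\<in>CC. e \<in> X"
proof -
  have v: "s e \<in> non_sinks E0 E1 s" using assms graph unfolding non_sinks_def by blast
  hence "is_partition (Cv (s e)) {f \<in> E1. s f = s e}" using bis unfolding is_bisep_def by simp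
  hence "\<exists>X\<in>Cv (s e). e \<in> X" using assms part_cover by fastforce
  thus ?thesis using v unfolding bisep_C_def by blast
qed

lemma S_sub: "X \<in> S \<Longrightarrow> X \<in> CC \<and> finite X"
  using bis unfolding is_bisep_def by blast

lemma T_sub: "Y \<in> T \<Longrightarrow> Y \<in> DD \<and> finite Y"
  using bis unfolding is_bisep_def by blast

section \<open>The point model\<close>

definition pathok :: "'e list \<Rightarrow> bool" where
  "pathok \<beta> \<longleftrightarrow> set \<beta> \<subseteq> E1 \<and> (\<forall>i. Suc i < length \<beta> \<longrightarrow> r (\<beta>!i) = s (\<beta>!Suc i))"

fun vtx :: "('v,'e) pt \<Rightarrow> 'v" where
  "vtx Junk = undefined"
| "vtx (P v \<beta> j []) = (if j < length \<beta> then s (\<beta>!j) else if \<beta> = [] then v else r (last \<beta>))"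
| "vtx (P v \<beta> j (Up e # ms)) = s e"
| "vtx (P v \<beta> j (Dn e # ms)) = r e"

fun covX :: "('v,'e) pt \<Rightarrow> 'e set \<Rightarrow> bool" where
  "covX (P v \<beta> j []) X = (j < length \<beta> \<and> \<beta>!j \<in> X)"
| "covX (P v \<beta> j (Up f # ms)) X = (f \<in> X)"
| "covX _ X = False"

fun covY :: "('v,'e) pt \<Rightarrow> 'e set \<Rightarrow> bool" where
  "covY (P v \<beta> j []) Y = (0 < j \<and> j \<le> length \<beta> \<and> \<beta>!(j-1) \<in> Y)"
| "covY (P v \<beta> j (Dn f # ms)) Y = (f \<in> Y)"
| "covY _ Y = False"

definition canUp :: "('v,'e) pt \<Rightarrow> 'e \<Rightarrow> bool" where
  "canUp b e \<longleftrightarrow> e \<in> E1 \<and> r e = vtx b \<and> (\<exists>Y\<in>T. e \<in> Y \<and> e = (SOME f. f \<in> Y) \<and> \<not> covY b Y)"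

definition canDn :: "('v,'e) pt \<Rightarrow> 'e \<Rightarrow> bool" where
  "canDn b e \<longleftrightarrow> e \<in> E1 \<and> s e = vtx b \<and> (\<exists>X\<in>S. e \<in> X \<and> e = (SOME f. f \<in> X) \<and> \<not> covX b X)"

fun push :: "'e step \<Rightarrow> ('v,'e) pt \<Rightarrow> ('v,'e) pt" where
  "push m (P v \<beta> j ms) = P v \<beta> j (m # ms)"
| "push m Junk = Junk"

fun valid :: "('v,'e) pt \<Rightarrow> bool" where
  "valid Junk = False"
| "valid (P v \<beta> j []) = (j \<le> length \<beta> \<and> pathok \<beta>)"
| "valid (P v \<beta> j (Up e # ms)) = (valid (P v \<beta> j ms) \<and> canUp (P v \<beta> j ms) e)"
| "valid (P v \<beta> j (Dn e # ms)) = (valid (P v \<beta> j ms) \<and> canDn (P v \<beta> j ms) e)"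

fun downOf :: "('v,'e) pt \<Rightarrow> 'e \<Rightarrow> ('v,'e) pt option" where
  "downOf (P v \<beta> j (Dn f # ms)) e = (if f = e then Some (P v \<beta> j ms) else None)"
| "downOf (P v \<beta> j []) e = (if 0 < j \<and> j \<le> length \<beta> \<and> \<beta>!(j-1) = e then Some (P v \<beta> (j-1) []) else None)"
| "downOf _ e = None"

fun upOf :: "('v,'e) pt \<Rightarrow> 'e \<Rightarrow> ('v,'e) pt option" where
  "upOf (P v \<beta> j (Up f # ms)) e = (if f = e then Some (P v \<beta> j ms) else None)"
| "upOf (P v \<beta> j []) e = (if j < length \<beta> \<and> \<beta>!j = e then Some (P v \<beta> (Suc j) []) else None)"
| "upOf _ e = None"

definition act_e :: "'e \<Rightarrow> ('v,'e) pt \<Rightarrow> ('v,'e) pt option" where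
  "act_e e b = (if \<not> valid b then None else if canUp b e then Some (push (Up e) b) else downOf b e)"

definition act_g :: "'e \<Rightarrow> ('v,'e) pt \<Rightarrow> ('v,'e) pt option" where
  "act_g e b = (if \<not> valid b then None else if canDn b e then Some (push (Dn e) b) else upOf b e)"

lemma canDn_cls: assumes "canDn b e" "X \<in> CC" "e \<in> X" shows "\<not> covX b X" "e = (SOME f. f \<in> X)" "X \<in> S"
proof -
  obtain X' where X': "X' \<in> S" "e \<in> X'" "e = (SOME f. f \<in> X')" "\<not> covX b X'" using assms(1) unfolding canDn_def by blast
  have "X' = X" using C_uniq[OF _ assms(2) X'(2) assms(3)] S_sub[OF X'(1)] by blast
  thus "\<not> covX b X" "e = (SOME f. f \<in> X)" "X \<in> S" using X' by auto
qed

lemma canUp_cls: assumes "canUp b e" "Y \<in> DD" "e \<in> Y" shows "\<not> covY b Y" "e = (SOME f. f \<in> Y)" "Y \<in> T"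
proof -
  obtain Y' where Y': "Y' \<in> T" "e \<in> Y'" "e = (SOME f. f \<in> Y')" "\<not> covY b Y'" using assms(1) unfolding canUp_def by blast
  have "Y' = Y" using D_uniq[OF _ assms(2) Y'(2) assms(3)] T_sub[OF Y'(1)] by blast
  thus "\<not> covY b Y" "e = (SOME f. f \<in> Y)" "Y \<in> T" using Y' by auto
qed

lemma canDn_notcov: "canDn b e \<Longrightarrow> \<not> (\<forall>X. e \<in> X \<longrightarrow> covX b X)"
  unfolding canDn_def by blast

lemma canUp_notcov: "canUp b e \<Longrightarrow> \<not> (\<forall>Y. e \<in> Y \<longrightarrow> covY b Y)"
  unfolding canUp_def by blast

lemma K1: assumes "act_e e b = Some c"
  shows "valid b" "valid c" "vtx b = r e" "vtx c = s e" "e \<in> E1" "act_g e c = Some b"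
proof -
  have vb: "valid b" using assms by (auto simp: act_e_def split: if_splits)
  then obtain v \<beta> j ms where b: "b = P v \<beta> j ms" by (cases b) auto
  have "valid c \<and> vtx b = r e \<and> vtx c = s e \<and> e \<in> E1 \<and> act_g e c = Some b"
  proof (cases "canUp b e")
    case True
    hence c: "c = P v \<beta> j (Up e # ms)" using assms vb b by (simp add: act_e_def)
    have "\<not> canDn c e" using canDn_notcov[of c e] c by auto
    thus ?thesis using True vb c b by (auto simp: canUp_def act_g_def)
  next
    case False
    hence d: "downOf b e = Some c" using assms vb by (simp add: act_e_def)
    show ?thesis
    proof (cases ms)
      case Nil
      hence j: "0 < j" "j \<le> length \<beta>" "\<beta>!(j-1) = e" and c: "c = P v \<beta> (j-1) []"
        using d b by (auto split: if_splits)
      have po: "pathok \<beta>" using vb b Nil by simp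
      have eE: "e \<in> E1" using po j unfolding pathok_def by (metis Suc_pred' diff_less less_one nth_mem subset_iff less_le_trans le_eq_less_or_eq)
      have vt: "vtx b = r e"
      proof (cases "j < length \<beta>")
        case True thus ?thesis using b Nil po j unfolding pathok_def by (metis Suc_pred' vtx.simps(2))
      next
        case False
        hence "j = length \<beta>" "\<beta> \<noteq> []" using j by auto
        thus ?thesis using b Nil j False by (simp add: last_conv_nth)
      qed
      have "\<not> canDn c e" using canDn_notcov[of c e] c j by auto
      moreover have "upOf c e = Some b" using c j b Nil by auto
      ultimately show ?thesis using c j po eE vt by (auto simp: act_g_def)
    next
      case (Cons m ms')
      then obtain f where m: "m = Dn f" using d b by (cases m) auto
      hence fe: "f = e" and c: "c = P v \<beta> j ms'" using d b Cons by (auto split: if_splits)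
      have "valid c" "canDn c e" using vb b Cons m fe c by auto
      thus ?thesis using b Cons m fe c by (auto simp: act_g_def canDn_def)
    qed
  qed
  thus "valid b" "valid c" "vtx b = r e" "vtx c = s e" "e \<in> E1" "act_g e c = Some b" using vb by auto
qed

lemma K2: assumes "act_g e c = Some b" shows "act_e e b = Some c"
proof -
  have vc: "valid c" using assms by (auto simp: act_g_def split: if_splits)
  then obtain v \<beta> j ms where c: "c = P v \<beta> j ms" by (cases c) auto
  show ?thesis
  proof (cases "canDn c e")
    case True
    hence b: "b = P v \<beta> j (Dn e # ms)" using assms vc c by (simp add: act_g_def)
    have "\<not> canUp b e" using canUp_notcov[of b e] b by auto
    moreover have "valid b" using b c vc True by simp
    ultimately show ?thesis using b c by (simp add: act_e_def)
  next
    case False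
    hence d: "upOf c e = Some b" using assms vc by (simp add: act_g_def)
    show ?thesis
    proof (cases ms)
      case Nil
      hence j: "j < length \<beta>" "\<beta>!j = e" and b: "b = P v \<beta> (Suc j) []"
        using d c by (auto split: if_splits)
      have "valid b" using vc c Nil j b by simp
      moreover have "\<not> canUp b e" using canUp_notcov[of b e] b j by auto
      ultimately show ?thesis using b c j Nil by (simp add: act_e_def)
    next
      case (Cons m ms')
      then obtain f where m: "m = Up f" using d c by (cases m) auto
      hence fe: "f = e" and b: "b = P v \<beta> j ms'" using d c Cons by (auto split: if_splits)
      have "valid b" "canUp b e" using vc c Cons m fe b by auto
      thus ?thesis using b c Cons m fe by (simp add: act_e_def)
    qed
  qed
qed


lemma act_g_range: assumes "act_g e b \<noteq> None" shows "valid b" "vtx b = s e" "e \<in> E1"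
proof -
  obtain b' where "act_g e b = Some b'" using assms by blast
  hence "act_e e b' = Some b" by (rule K2)
  thus "valid b" "vtx b = s e" "e \<in> E1" using K1 by blast+
qed

lemma act_e_dom: assumes "act_e e b \<noteq> None" shows "valid b" "vtx b = r e" "e \<in> E1"
  using assms K1 by blast+

lemma act_g_iff: "act_g e b \<noteq> None \<longleftrightarrow> valid b \<and> (canDn b e \<or> upOf b e \<noteq> None)"
  by (auto simp: act_g_def)

lemma act_e_iff: "act_e e b \<noteq> None \<longleftrightarrow> valid b \<and> (canUp b e \<or> downOf b e \<noteq> None)"
  by (auto simp: act_e_def)

lemma upOf_cov: "upOf b e \<noteq> None \<Longrightarrow> e \<in> X \<Longrightarrow> covX b X"
proof (cases b)
  case (P v \<beta> j ms) assume a: "upOf b e \<noteq> None" "e \<in> X"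
  thus ?thesis using P by (cases ms; cases "hd ms") (auto split: if_splits)
qed auto

lemma downOf_cov: "downOf b e \<noteq> None \<Longrightarrow> e \<in> Y \<Longrightarrow> covY b Y"
proof (cases b)
  case (P v \<beta> j ms) assume a: "downOf b e \<noteq> None" "e \<in> Y"
  thus ?thesis using P by (cases ms; cases "hd ms") (auto split: if_splits)
qed auto

lemma upOf_uniq: "upOf b e1 \<noteq> None \<Longrightarrow> upOf b e2 \<noteq> None \<Longrightarrow> e1 = e2"
proof (cases b)
  case (P v \<beta> j ms) assume a: "upOf b e1 \<noteq> None" "upOf b e2 \<noteq> None"
  thus ?thesis using P by (cases ms; cases "hd ms") (auto split: if_splits)
qed auto

lemma downOf_uniq: "downOf b e1 \<noteq> None \<Longrightarrow> downOf b e2 \<noteq> None \<Longrightarrow> e1 = e2"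
proof (cases b)
  case (P v \<beta> j ms) assume a: "downOf b e1 \<noteq> None" "downOf b e2 \<noteq> None"
  thus ?thesis using P by (cases ms; cases "hd ms") (auto split: if_splits)
qed auto

lemma K3_uniq: assumes "X \<in> CC" "e1 \<in> X" "e2 \<in> X" "act_g e1 b \<noteq> None" "act_g e2 b \<noteq> None"
  shows "e1 = e2"
proof -
  have h1: "canDn b e1 \<or> upOf b e1 \<noteq> None" and h2: "canDn b e2 \<or> upOf b e2 \<noteq> None"
    using assms(4,5) act_g_iff by blast+
  show ?thesis
  proof (cases "canDn b e1")
    case c1: True
    show ?thesis
    proof (cases "canDn b e2")
      case True thus ?thesis using c1 canDn_cls(2)[OF _ assms(1)] assms(2,3) by metis
    next
      case False thus ?thesis using h2 upOf_cov[of b e2 X] assms canDn_cls(1)[OF c1 assms(1,2)] by blast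
    qed
  next
    case c1: False
    hence u1: "upOf b e1 \<noteq> None" using h1 by blast
    show ?thesis
    proof (cases "canDn b e2")
      case True thus ?thesis using upOf_cov[OF u1 assms(2)] canDn_cls(1)[OF True assms(1,3)] by blast
    next
      case False thus ?thesis using h2 u1 upOf_uniq by blast
    qed
  qed
qed

lemma K4_uniq: assumes "Y \<in> DD" "e1 \<in> Y" "e2 \<in> Y" "act_e e1 b \<noteq> None" "act_e e2 b \<noteq> None"
  shows "e1 = e2"
proof -
  have h1: "canUp b e1 \<or> downOf b e1 \<noteq> None" and h2: "canUp b e2 \<or> downOf b e2 \<noteq> None"
    using assms(4,5) act_e_iff by blast+
  show ?thesis
  proof (cases "canUp b e1")
    case c1: True
    show ?thesis
    proof (cases "canUp b e2")
      case True thus ?thesis using c1 canUp_cls(2)[OF _ assms(1)] assms(2,3) by metis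
    next
      case False thus ?thesis using h2 downOf_cov[of b e2 Y] assms canUp_cls(1)[OF c1 assms(1,2)] by blast
    qed
  next
    case c1: False
    hence u1: "downOf b e1 \<noteq> None" using h1 by blast
    show ?thesis
    proof (cases "canUp b e2")
      case True thus ?thesis using downOf_cov[OF u1 assms(2)] canUp_cls(1)[OF True assms(1,3)] by blast
    next
      case False thus ?thesis using h2 u1 downOf_uniq by blast
    qed
  qed
qed

lemma K3_ex: assumes "X \<in> S" "valid b" "vtx b = src_set s X" shows "\<exists>e\<in>X. act_g e b \<noteq> None"
proof (cases "covX b X")
  case True
  obtain v \<beta> j ms where b: "b = P v \<beta> j ms" using assms(2) by (cases b) auto
  have "\<exists>e\<in>X. upOf b e \<noteq> None"
  proof (cases ms)
    case Nil thus ?thesis using True b by auto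
  next
    case (Cons m ms') thus ?thesis using True b by (cases m) auto
  qed
  thus ?thesis using assms(2) act_g_iff by blast
next
  case False
  have XC: "X \<in> CC" using S_sub assms(1) by blast
  let ?e = "SOME f. f \<in> X"
  have eX: "?e \<in> X" using C_props(1)[OF XC] by (simp add: some_in_eq)
  have e1: "?e \<in> E1" using eX C_props(2)[OF XC] by blast
  have e2: "s ?e = vtx b" using C_props(3)[OF XC eX] assms(3) by simp
  have "canDn b ?e" unfolding canDn_def using e1 e2 assms(1) eX False by blast
  thus ?thesis using eX assms(2) act_g_iff by blast
qed

lemma K4_ex: assumes "Y \<in> T" "valid b" "vtx b = rng_set r Y" shows "\<exists>e\<in>Y. act_e e b \<noteq> None"
proof (cases "covY b Y")
  case True
  obtain v \<beta> j ms where b: "b = P v \<beta> j ms" using assms(2) by (cases b) auto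
  have "\<exists>e\<in>Y. downOf b e \<noteq> None"
  proof (cases ms)
    case Nil thus ?thesis using True b by auto
  next
    case (Cons m ms') thus ?thesis using True b by (cases m) auto
  qed
  thus ?thesis using assms(2) act_e_iff by blast
next
  case False
  have YD: "Y \<in> DD" using T_sub assms(1) by blast
  let ?e = "SOME f. f \<in> Y"
  have eY: "?e \<in> Y" using D_props(1)[OF YD] by (simp add: some_in_eq)
  have e1: "?e \<in> E1" using eY D_props(2)[OF YD] by blast
  have e2: "r ?e = vtx b" using D_props(3)[OF YD eY] assms(3) by simp
  have "canUp b ?e" unfolding canUp_def using e1 e2 assms(1) eY False by blast
  thus ?thesis using eY assms(2) act_e_iff by blast
qed

fun act1 :: "('v,'e) gen \<Rightarrow> ('v,'e) pt \<Rightarrow> ('v,'e) pt option" where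
  "act1 (V v) b = (if valid b \<and> vtx b = v then Some b else None)"
| "act1 (Ed e) b = act_e e b"
| "act1 (Gh e) b = act_g e b"

fun act :: "('v,'e) gen list \<Rightarrow> ('v,'e) pt \<Rightarrow> ('v,'e) pt option" where
  "act [] b = Some b"
| "act (x # xs) b = (case act xs b of None \<Rightarrow> None | Some b' \<Rightarrow> act1 x b')"

lemma act_append: "act (xs @ ys) b = (case act ys b of None \<Rightarrow> None | Some b' \<Rightarrow> act xs b')"
  by (induction xs) (auto split: option.splits)

lemma act1_inj: assumes "act1 x c1 = Some c" "act1 x c2 = Some c" shows "c1 = c2"
proof (cases x)
  case (V v) thus ?thesis using assms by (auto split: if_splits)
next
  case (Ed e)
  hence "act_e e c1 = Some c" "act_e e c2 = Some c" using assms by auto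
  hence "act_g e c = Some c1" "act_g e c = Some c2" using K1(6) by blast+
  thus ?thesis by simp
next
  case (Gh e)
  hence "act_g e c1 = Some c" "act_g e c2 = Some c" using assms by auto
  hence "act_e e c = Some c1" "act_e e c = Some c2" using K2 by blast+
  thus ?thesis by simp
qed

lemma act_inj: "act u c1 = Some c \<Longrightarrow> act u c2 = Some c \<Longrightarrow> c1 = c2"
proof (induction u arbitrary: c)
  case Nil thus ?case by simp
next
  case (Cons x u)
  obtain d1 where d1: "act u c1 = Some d1" "act1 x d1 = Some c" using Cons.prems(1) by (auto split: option.splits)
  obtain d2 where d2: "act u c2 = Some d2" "act1 x d2 = Some c" using Cons.prems(2) by (auto split: option.splits)
  have "d1 = d2" using act1_inj d1 d2 by blast
  thus ?case using Cons.IH d1 d2 by blast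
qed

abbreviation "EV \<equiv> ev act"

lemma ev_ctx: assumes fin: "finite (supp q)" and z: "\<And>b c. EV q b c = 0"
  shows "finite (supp (ctx u q w))" "EV (ctx u q w) b c = 0"
proof -
  let ?f = "\<lambda>y. u @ y @ w"
  have s: "supp (ctx u q w) \<subseteq> ?f ` supp q"
  proof
    fix z assume zs: "z \<in> supp (ctx u q w)"
    show "z \<in> ?f ` supp q"
    proof (cases "\<exists>y. z = u @ y @ w")
      case True then obtain y where "z = u @ y @ w" by blast
      thus ?thesis using zs by (auto simp: supp_def)
    next
      case False thus ?thesis using zs ctx_other[of z u w q] by (auto simp: supp_def)
    qed
  qed
  have finF: "finite (?f ` supp q)" using fin by simp
  show "finite (supp (ctx u q w))" using finite_subset[OF s finF] .
  have inj: "inj_on ?f A" for A by (auto simp: inj_on_def)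
  have "EV (ctx u q w) b c = sum (ctx u q w) {z \<in> ?f ` supp q. act z b = Some c}"
    by (rule ev_eq[OF finF s])
  also have "{z \<in> ?f ` supp q. act z b = Some c} = ?f ` {y \<in> supp q. act (u @ y @ w) b = Some c}" by auto
  also have "sum (ctx u q w) (?f ` {y \<in> supp q. act (u @ y @ w) b = Some c}) = sum q {y \<in> supp q. act (u @ y @ w) b = Some c}"
    by (subst sum.reindex[OF inj]) simp
  also have "\<dots> = 0"
  proof (cases "act w b")
    case None
    hence "{y \<in> supp q. act (u @ y @ w) b = Some c} = {}" by (auto simp: act_append)
    thus ?thesis by (simp only: sum.empty)
  next
    case (Some b')
    show ?thesis
    proof (cases "\<exists>c'. act u c' = Some c")
      case True
      then obtain c' where c': "act u c' = Some c" by blast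
      have iff: "act (u @ y @ w) b = Some c \<longleftrightarrow> act y b' = Some c'" for y
      proof -
        have e: "act (u @ y @ w) b = (case act y b' of None \<Rightarrow> None | Some d \<Rightarrow> act u d)"
          using Some by (simp add: act_append)
        show ?thesis
        proof (cases "act y b'")
          case None thus ?thesis using e by simp
        next
          case (Some d)
          have "act u d = Some c \<longleftrightarrow> d = c'" using act_inj[of u d c c'] c' by blast
          thus ?thesis using e Some by simp
        qed
      qed
      have "{y \<in> supp q. act (u @ y @ w) b = Some c} = {y. q y \<noteq> 0 \<and> act y b' = Some c'}"
        unfolding iff by (auto simp: supp_def)
      thus ?thesis using z[of b' c'] by (simp add: ev_def)
    next
      case False
      hence "{y \<in> supp q. act (u @ y @ w) b = Some c} = {}" using Some by (auto simp: act_append split: option.splits)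
      thus ?thesis by (simp only: sum.empty)
    qed
  qed
  finally show "EV (ctx u q w) b c = 0" .
qed

lemma supp_zero: "supp fa_zero = {}" by (simp add: supp_def fa_zero_def)

lemma ideal_ev: assumes "x \<in> fa_ideal A R" "\<And>q. q \<in> R \<Longrightarrow> finite (supp q) \<and> (\<forall>b c. EV q b c = 0)"
  shows "finite (supp x) \<and> (\<forall>b c. EV x b c = 0)"
  using assms(1)
proof (induction x rule: fa_ideal.induct)
  case zero
  show ?case by (simp add: ev_zero supp_zero)
next
  case (gen q u w)
  have "finite (supp q)" "\<And>b c. EV q b c = 0" using assms(2)[OF gen(1)] by auto
  thus ?case using ev_ctx unfolding ctx_def by blast
next
  case (add x y)
  have "supp (fa_add x y) \<subseteq> supp x \<union> supp y" by (auto simp: supp_def fa_add_def)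
  thus ?case using add ev_add finite_subset by (metis add_0 finite_UnI)
next
  case (smult x k)
  have "supp (fa_smult k x) \<subseteq> supp x" by (auto simp: supp_def fa_smult_def)
  thus ?case using smult ev_smult finite_subset by (metis mult_zero_right)
qed


section \<open>Relators are killed\<close>

lemma fin_diff: "finite (supp f) \<Longrightarrow> finite (supp g) \<Longrightarrow> finite (supp (fa_diff f g))"
proof -
  assume a: "finite (supp f)" "finite (supp g)"
  have "supp (fa_diff f g) \<subseteq> supp f \<union> supp g" by (auto simp: supp_def fa_diff_def)
  thus ?thesis using a finite_subset by blast
qed

lemma fin_mono: "finite (supp (fa_mono z))" by (simp add: supp_mono)

lemma ev_mono_diff: assumes "act x b = act y b" shows "EV (fa_diff (fa_mono x) (fa_mono y)) b c = 0"
  using assms by (simp add: ev_diff supp_mono ev_mono)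

lemma ev_mono_zero: assumes "act x b = None" shows "EV (fa_diff (fa_mono x) fa_zero) b c = 0"
  using assms by (simp add: ev_diff supp_mono supp_zero ev_mono ev_zero)

lemma rel_ok_mono: assumes "\<And>b. act x b = act y b" 
  shows "finite (supp (fa_diff (fa_mono x) (fa_mono y))) \<and> (\<forall>b c. EV (fa_diff (fa_mono x) (fa_mono y)) b c = 0)"
  using assms ev_mono_diff fin_diff fin_mono by blast

lemma rel_ok_zero: assumes "\<And>b. act x b = None" 
  shows "finite (supp (fa_diff (fa_mono x) fa_zero)) \<and> (\<forall>b c. EV (fa_diff (fa_mono x) fa_zero) b c = 0)"
proof -
  have "finite (supp (fa_diff (fa_mono x) fa_zero))" by (rule fin_diff) (simp_all add: supp_zero fin_mono)
  thus ?thesis using assms ev_mono_zero by blast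
qed

lemma path_rels_ok: assumes "q \<in> path_rels E0 E1 r s"
  shows "finite (supp q) \<and> (\<forall>b c. EV q b c = 0)"
proof -
  consider (vv) v w where "q = fa_diff (fa_mult (fa_gen (V v)) (fa_gen (V w))) (if v = w then fa_gen (V v) else fa_zero)"
    | (se) e where "e \<in> E1" "q = fa_diff (fa_mult (fa_gen (V (s e))) (fa_gen (Ed e))) (fa_gen (Ed e))"
    | (er) e where "e \<in> E1" "q = fa_diff (fa_mult (fa_gen (Ed e)) (fa_gen (V (r e)))) (fa_gen (Ed e))"
    using assms unfolding path_rels_def by blast
  thus ?thesis
  proof cases
    case vv
    show ?thesis
    proof (cases "v = w")
      case True
      have qe: "q = fa_diff (fa_mono [V v, V v]) (fa_mono [V v])" using vv True by (simp add: gen_mono mono_mult)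
      have hh: "act [V v, V v] b = act [V v] b" for b by simp
      show ?thesis unfolding qe by (rule rel_ok_mono[OF hh])
    next
      case False
      have qe: "q = fa_diff (fa_mono [V v, V w]) fa_zero" using vv False by (simp add: gen_mono mono_mult)
      have hh: "act [V v, V w] b = None" for b using False by simp
      show ?thesis unfolding qe by (rule rel_ok_zero[OF hh])
    qed
  next
    case se
    have qe: "q = fa_diff (fa_mono [V (s e), Ed e]) (fa_mono [Ed e])" using se by (simp add: gen_mono mono_mult)
    have hh: "act [V (s e), Ed e] b = act [Ed e] b" for b
      by (cases "act_e e b") (auto dest: K1)
    show ?thesis unfolding qe by (rule rel_ok_mono[OF hh])
  next
    case er
    have qe: "q = fa_diff (fa_mono [Ed e, V (r e)]) (fa_mono [Ed e])" using er by (simp add: gen_mono mono_mult)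
    have hh: "act [Ed e, V (r e)] b = act [Ed e] b" for b
      by (cases "act_e e b") (auto dest: K1)
    show ?thesis unfolding qe by (rule rel_ok_mono[OF hh])
  qed
qed

lemma ghost_rels_ok: assumes "q \<in> ghost_rels E0 E1 r s"
  shows "finite (supp q) \<and> (\<forall>b c. EV q b c = 0)"
proof -
  consider (a) e where "e \<in> E1" "q = fa_diff (fa_mult (fa_gen (V (r e))) (fa_gen (Gh e))) (fa_gen (Gh e))"
    | (b) e where "e \<in> E1" "q = fa_diff (fa_mult (fa_gen (Gh e)) (fa_gen (V (s e)))) (fa_gen (Gh e))"
    using assms unfolding ghost_rels_def by blast
  thus ?thesis
  proof cases
    case a
    have qe: "q = fa_diff (fa_mono [V (r e), Gh e]) (fa_mono [Gh e])" using a by (simp add: gen_mono mono_mult)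
    have hh: "act [V (r e), Gh e] b = act [Gh e] b" for b
    proof (cases "act_g e b")
      case (Some c)
      hence "act_e e c = Some b" by (rule K2)
      thus ?thesis using Some K1 by simp
    qed simp
    show ?thesis unfolding qe by (rule rel_ok_mono[OF hh])
  next
    case b
    have qe: "q = fa_diff (fa_mono [Gh e, V (s e)]) (fa_mono [Gh e])" using b by (simp add: gen_mono mono_mult)
    have hh: "act [Gh e, V (s e)] b = act [Gh e] b" for b
    proof (cases "act_g e b")
      case (Some c)
      hence "valid b" "vtx b = s e" using act_g_range by auto
      thus ?thesis using Some by simp
    next
      case None
      thus ?thesis by auto
    qed
    show ?thesis unfolding qe by (rule rel_ok_mono[OF hh])
  qed
qed


lemma sum_ind: assumes "finite I" "Q \<Longrightarrow> \<exists>y0. {y\<in>I. Pr y} = {y0}" "\<not> Q \<Longrightarrow> {y\<in>I. Pr y} = {}"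
  shows "(\<Sum>y\<in>I. if Pr y then 1 else 0) = (if Q then 1 else (0::'k::field))"
proof -
  have "(\<Sum>y\<in>I. if Pr y then 1 else (0::'k)) = (\<Sum>y\<in>{y\<in>I. Pr y}. 1)"
    using sum.inter_filter[OF assms(1), of "\<lambda>_. 1::'k" Pr] by simp
  thus ?thesis
  proof (cases Q)
    case True then obtain y0 where "{y\<in>I. Pr y} = {y0}" using assms(2) by blast
    thus ?thesis using True \<open>(\<Sum>y\<in>I. if Pr y then 1 else (0::'k)) = (\<Sum>y\<in>{y\<in>I. Pr y}. 1)\<close> by simp
  next
    case False hence "{y\<in>I. Pr y} = {}" using assms(3) by blast
    thus ?thesis using False \<open>(\<Sum>y\<in>I. if Pr y then 1 else (0::'k)) = (\<Sum>y\<in>{y\<in>I. Pr y}. 1)\<close> by simp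
  qed
qed

lemma ev_gen_V: "EV (fa_gen (V v)) b c = (if valid b \<and> vtx b = v \<and> c = b then 1 else 0)"
  by (auto simp: gen_mono ev_mono)

lemma CL_S_ok: assumes XS: "X \<in> S" and X'S: "X' \<in> S"
  shows "finite (supp (fa_diff
        (fa_sum (\<lambda>Y. fa_mult (edge_XY X Y) (ghost_XY Y X')) {Y \<in> DD. X \<inter> Y \<noteq> {}})
        (if X = X' then fa_gen (V (src_set s X)) else (fa_zero :: ('v,'e) gen list \<Rightarrow> 'k::field)))) \<and>
    (\<forall>b c. EV (fa_diff
        (fa_sum (\<lambda>Y. fa_mult (edge_XY X Y) (ghost_XY Y X')) {Y \<in> DD. X \<inter> Y \<noteq> {}})
        (if X = X' then fa_gen (V (src_set s X)) else (fa_zero :: ('v,'e) gen list \<Rightarrow> 'k::field))) b c = 0)"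
proof -
  have XC: "X \<in> CC" "X' \<in> CC" and finX: "finite X" using S_sub XS X'S by auto
  define I where "I = {Y \<in> DD. X \<inter> Y \<noteq> {}}"
  define G where "G = (\<lambda>Y. fa_mult (edge_XY X Y) (ghost_XY Y X') :: ('v,'e) gen list \<Rightarrow> 'k::field)"
  define rhs where "rhs = (if X = X' then fa_gen (V (src_set s X)) else fa_zero :: ('v,'e) gen list \<Rightarrow> 'k::field)"
  define eY where "eY = (\<lambda>Y. the_elem (X \<inter> Y))"
  have eY: "eY Y \<in> X \<and> eY Y \<in> Y \<and> Y \<in> DD \<and> the_elem (Y \<inter> X) = eY Y" if YI: "Y \<in> I" for Y
  proof -
    obtain e where e: "e \<in> X" "e \<in> Y" "Y \<in> DD" using YI unfolding I_def by blast
    thus ?thesis using CD_the[OF XC(1) e(3) e(1,2)] by (simp add: eY_def)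
  qed
  have finI: "finite I"
  proof -
    have "inj_on eY I"
    proof (rule inj_onI)
      fix Y1 Y2 assume "Y1 \<in> I" "Y2 \<in> I" "eY Y1 = eY Y2"
      thus "Y1 = Y2" using eY D_uniq by metis
    qed
    moreover have "eY ` I \<subseteq> X" using eY by blast
    ultimately show ?thesis using finX finite_imageD finite_subset by blast
  qed
  have G: "G Y = (if Y \<inter> X' = {} then fa_zero else fa_mono [Ed (eY Y), Gh (the_elem (Y \<inter> X'))])" if "Y \<in> I" for Y
    using that by (auto simp: G_def edge_XY_def ghost_XY_def I_def eY_def gen_mono mono_mult zero_mult2)
  have finG: "finite (supp (G Y))" if "Y \<in> I" for Y
    using G[OF that] by (simp add: supp_zero fin_mono)
  have evG: "EV (G Y) b c = (if Y \<inter> X' \<noteq> {} \<and> act [Ed (eY Y), Gh (the_elem (Y \<inter> X'))] b = Some c then 1 else 0)"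
    if "Y \<in> I" for Y b c
    using G[OF that] by (simp add: ev_mono ev_zero)
  have finR: "finite (supp rhs)" by (simp add: rhs_def gen_mono supp_zero fin_mono)
  have finS: "finite (supp (fa_sum G I))" by (rule ev_sum(2)[OF finI]) (rule finG)
  have sumEV: "EV (fa_sum G I) b c = (\<Sum>Y\<in>I. EV (G Y) b c)" for b c
    by (rule ev_sum(1)[OF finI]) (rule finG)
  have main: "EV (fa_sum G I) b c = EV rhs b c" for b c
  proof (cases "X = X'")
    case False
    have "EV (G Y) b c = 0" if Y: "Y \<in> I" for Y
    proof (cases "Y \<inter> X' \<noteq> {} \<and> act [Ed (eY Y), Gh (the_elem (Y \<inter> X'))] b = Some c")
      case True
      let ?e = "eY Y" and ?f = "the_elem (Y \<inter> X')"
      obtain f where f: "f \<in> Y" "f \<in> X'" using True by blast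
      have fe: "?f = f" using CD_the(2)[OF XC(2) _ f(2,1)] eY[OF Y] by blast
      obtain d where d: "act_g ?f b = Some d" "act_e ?e d = Some c" using True by (auto split: option.splits)
      have "act_e ?f d = Some b" using d(1) by (rule K2)
      hence "?e = ?f" using K4_uniq[of Y ?e ?f d] d(2) eY[OF Y] fe f by simp
      hence "X = X'" using C_uniq[OF XC] eY[OF Y] fe f by metis
      thus ?thesis using False by simp
    next
      case False thus ?thesis using evG[OF Y] by simp
    qed
    hence "EV (fa_sum G I) b c = 0" using sumEV by simp
    moreover have "EV rhs b c = 0" using False by (simp add: rhs_def ev_zero)
    ultimately show ?thesis by simp
  next
    case True
    let ?v0 = "src_set s X"
    have evG': "EV (G Y) b c = (if act_g (eY Y) b \<noteq> None \<and> c = b then 1 else 0)" if Y: "Y \<in> I" for Y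
    proof -
      have ne: "Y \<inter> X' \<noteq> {}" and th: "the_elem (Y \<inter> X') = eY Y" using eY[OF Y] True by auto
      have "act [Ed (eY Y), Gh (eY Y)] b = Some c \<longleftrightarrow> act_g (eY Y) b \<noteq> None \<and> c = b"
        by (cases "act_g (eY Y) b") (auto dest: K2)
      thus ?thesis using evG[OF Y] ne th by simp
    qed
    have rhsv: "EV rhs b c = (if valid b \<and> vtx b = ?v0 \<and> c = b then 1 else 0)"
      using True by (simp add: rhs_def ev_gen_V)
    show ?thesis
    proof (cases "c = b")
      case False
      thus ?thesis using sumEV evG' rhsv by simp
    next
      case cb: True
      have "(\<Sum>Y\<in>I. EV (G Y) b c) = (\<Sum>Y\<in>I. if act_g (eY Y) b \<noteq> None then 1 else 0)"
        using evG' cb by simp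
      also have "\<dots> = (if valid b \<and> vtx b = ?v0 then 1 else 0)"
      proof (rule sum_ind[OF finI])
        assume Q: "valid b \<and> vtx b = ?v0"
        obtain e where e: "e \<in> X" "act_g e b \<noteq> None" using K3_ex[OF XS] Q by blast
        obtain Y0 where Y0: "Y0 \<in> DD" "e \<in> Y0" using edge_D e(1) C_props(2)[OF XC(1)] by blast
        have Y0I: "Y0 \<in> I" using Y0 e by (auto simp: I_def)
        have eY0: "eY Y0 = e" using CD_the(1)[OF XC(1) Y0(1) e(1) Y0(2)] by (simp add: eY_def)
        have "{Y\<in>I. act_g (eY Y) b \<noteq> None} = {Y0}"
        proof (intro equalityI subsetI)
          fix Y assume "Y \<in> {Y\<in>I. act_g (eY Y) b \<noteq> None}"
          hence Y: "Y \<in> I" "act_g (eY Y) b \<noteq> None" by auto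
          have "eY Y = e" using K3_uniq[OF XC(1) _ e(1) Y(2) e(2)] eY[OF Y(1)] by blast
          hence "Y = Y0" using D_uniq[OF _ Y0(1) _ Y0(2)] eY[OF Y(1)] by metis
          thus "Y \<in> {Y0}" by simp
        next
          fix Y assume "Y \<in> {Y0}"
          thus "Y \<in> {Y\<in>I. act_g (eY Y) b \<noteq> None}" using Y0I eY0 e by simp
        qed
        thus "\<exists>y0. {Y\<in>I. act_g (eY Y) b \<noteq> None} = {y0}" by blast
      next
        assume nQ: "\<not> (valid b \<and> vtx b = ?v0)"
        show "{Y\<in>I. act_g (eY Y) b \<noteq> None} = {}"
        proof (rule ccontr)
          assume "{Y\<in>I. act_g (eY Y) b \<noteq> None} \<noteq> {}"
          then obtain Y where Y: "Y \<in> I" "act_g (eY Y) b \<noteq> None" by blast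
          have "valid b" "vtx b = s (eY Y)" using act_g_range[OF Y(2)] by auto
          moreover have "s (eY Y) = ?v0" using C_props(3)[OF XC(1)] eY[OF Y(1)] by blast
          ultimately show False using nQ by simp
        qed
      qed
      finally show ?thesis using sumEV rhsv cb by simp
    qed
  qed
  have "finite (supp (fa_diff (fa_sum G I) rhs)) \<and> (\<forall>b c. EV (fa_diff (fa_sum G I) rhs) b c = 0)"
    by (simp add: main finR finS fin_diff ev_diff)
  thus ?thesis unfolding G_def I_def rhs_def .
qed


lemma CL_T_ok: assumes YT: "Y \<in> T" and Y'T: "Y' \<in> T"
  shows "finite (supp (fa_diff
        (fa_sum (\<lambda>X. fa_mult (ghost_XY Y X) (edge_XY X Y')) {X \<in> CC. Y \<inter> X \<noteq> {}})
        (if Y = Y' then fa_gen (V (rng_set r Y)) else (fa_zero :: ('v,'e) gen list \<Rightarrow> 'k::field)))) \<and>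
    (\<forall>b c. EV (fa_diff
        (fa_sum (\<lambda>X. fa_mult (ghost_XY Y X) (edge_XY X Y')) {X \<in> CC. Y \<inter> X \<noteq> {}})
        (if Y = Y' then fa_gen (V (rng_set r Y)) else (fa_zero :: ('v,'e) gen list \<Rightarrow> 'k::field))) b c = 0)"
proof -
  have YD: "Y \<in> DD" "Y' \<in> DD" and finY: "finite Y" using T_sub YT Y'T by auto
  define J where "J = {X \<in> CC. Y \<inter> X \<noteq> {}}"
  define G where "G = (\<lambda>X. fa_mult (ghost_XY Y X) (edge_XY X Y') :: ('v,'e) gen list \<Rightarrow> 'k::field)"
  define rhs where "rhs = (if Y = Y' then fa_gen (V (rng_set r Y)) else fa_zero :: ('v,'e) gen list \<Rightarrow> 'k::field)"
  define gX where "gX = (\<lambda>X. the_elem (Y \<inter> X))"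
  have gX: "gX X \<in> Y \<and> gX X \<in> X \<and> X \<in> CC \<and> the_elem (X \<inter> Y) = gX X" if XJ: "X \<in> J" for X
  proof -
    obtain e where e: "e \<in> Y" "e \<in> X" "X \<in> CC" using XJ unfolding J_def by blast
    thus ?thesis using CD_the[OF e(3) YD(1) e(2,1)] by (simp add: gX_def)
  qed
  have finJ: "finite J"
  proof -
    have "inj_on gX J"
    proof (rule inj_onI)
      fix X1 X2 assume "X1 \<in> J" "X2 \<in> J" "gX X1 = gX X2"
      thus "X1 = X2" using gX C_uniq by metis
    qed
    moreover have "gX ` J \<subseteq> Y" using gX by blast
    ultimately show ?thesis using finY finite_imageD finite_subset by blast
  qed
  have G: "G X = (if X \<inter> Y' = {} then fa_zero else fa_mono [Gh (gX X), Ed (the_elem (X \<inter> Y'))])" if "X \<in> J" for X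
    using that by (auto simp: G_def edge_XY_def ghost_XY_def J_def gX_def gen_mono mono_mult zero_mult2)
  have finG: "finite (supp (G X))" if "X \<in> J" for X
    using G[OF that] by (simp add: supp_zero fin_mono)
  have evG: "EV (G X) b c = (if X \<inter> Y' \<noteq> {} \<and> act [Gh (gX X), Ed (the_elem (X \<inter> Y'))] b = Some c then 1 else 0)"
    if "X \<in> J" for X b c
    using G[OF that] by (simp add: ev_mono ev_zero)
  have finR: "finite (supp rhs)" by (simp add: rhs_def gen_mono supp_zero fin_mono)
  have finS: "finite (supp (fa_sum G J))" by (rule ev_sum(2)[OF finJ]) (rule finG)
  have sumEV: "EV (fa_sum G J) b c = (\<Sum>X\<in>J. EV (G X) b c)" for b c
    by (rule ev_sum(1)[OF finJ]) (rule finG)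
  have main: "EV (fa_sum G J) b c = EV rhs b c" for b c
  proof (cases "Y = Y'")
    case False
    have "EV (G X) b c = 0" if X: "X \<in> J" for X
    proof (cases "X \<inter> Y' \<noteq> {} \<and> act [Gh (gX X), Ed (the_elem (X \<inter> Y'))] b = Some c")
      case True
      let ?g = "gX X" and ?g' = "the_elem (X \<inter> Y')"
      obtain f where f: "f \<in> X" "f \<in> Y'" using True by blast
      have fe: "?g' = f" using CD_the(1)[OF _ YD(2) f] gX[OF X] by blast
      obtain d where d: "act_e ?g' b = Some d" "act_g ?g d = Some c" using True by (auto split: option.splits)
      have "act_g ?g' d = Some b" using d(1) by (rule K1(6))
      hence "?g = ?g'" using K3_uniq[of X ?g ?g' d] d(2) gX[OF X] fe f by simp
      hence "Y = Y'" using D_uniq[OF YD] gX[OF X] fe f by metis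
      thus ?thesis using False by simp
    next
      case False thus ?thesis using evG[OF X] by simp
    qed
    hence "EV (fa_sum G J) b c = 0" using sumEV by simp
    moreover have "EV rhs b c = 0" using False by (simp add: rhs_def ev_zero)
    ultimately show ?thesis by simp
  next
    case True
    let ?v0 = "rng_set r Y"
    have evG': "EV (G X) b c = (if act_e (gX X) b \<noteq> None \<and> c = b then 1 else 0)" if X: "X \<in> J" for X
    proof -
      have ne: "X \<inter> Y' \<noteq> {}" and th: "the_elem (X \<inter> Y') = gX X" using gX[OF X] True by auto
      have "act [Gh (gX X), Ed (gX X)] b = Some c \<longleftrightarrow> act_e (gX X) b \<noteq> None \<and> c = b"
        by (cases "act_e (gX X) b") (auto dest: K1(6))
      thus ?thesis using evG[OF X] ne th by simp
    qed
    have rhsv: "EV rhs b c = (if valid b \<and> vtx b = ?v0 \<and> c = b then 1 else 0)"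
      using True by (simp add: rhs_def ev_gen_V)
    show ?thesis
    proof (cases "c = b")
      case False
      thus ?thesis using sumEV evG' rhsv by simp
    next
      case cb: True
      have "(\<Sum>X\<in>J. EV (G X) b c) = (\<Sum>X\<in>J. if act_e (gX X) b \<noteq> None then 1 else 0)"
        using evG' cb by simp
      also have "\<dots> = (if valid b \<and> vtx b = ?v0 then 1 else 0)"
      proof (rule sum_ind[OF finJ])
        assume Q: "valid b \<and> vtx b = ?v0"
        obtain e where e: "e \<in> Y" "act_e e b \<noteq> None" using K4_ex[OF YT] Q by blast
        obtain X0 where X0: "X0 \<in> CC" "e \<in> X0" using edge_C e(1) D_props(2)[OF YD(1)] by blast
        have X0J: "X0 \<in> J" using X0 e by (auto simp: J_def)
        have gX0: "gX X0 = e" using CD_the(2)[OF X0(1) YD(1) X0(2) e(1)] by (simp add: gX_def)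
        have "{X\<in>J. act_e (gX X) b \<noteq> None} = {X0}"
        proof (intro equalityI subsetI)
          fix X assume "X \<in> {X\<in>J. act_e (gX X) b \<noteq> None}"
          hence X: "X \<in> J" "act_e (gX X) b \<noteq> None" by auto
          have "gX X = e" using K4_uniq[OF YD(1) _ e(1) X(2) e(2)] gX[OF X(1)] by blast
          hence "X = X0" using C_uniq[OF _ X0(1) _ X0(2)] gX[OF X(1)] by metis
          thus "X \<in> {X0}" by simp
        next
          fix X assume "X \<in> {X0}"
          thus "X \<in> {X\<in>J. act_e (gX X) b \<noteq> None}" using X0J gX0 e by simp
        qed
        thus "\<exists>y0. {X\<in>J. act_e (gX X) b \<noteq> None} = {y0}" by blast
      next
        assume nQ: "\<not> (valid b \<and> vtx b = ?v0)"
        show "{X\<in>J. act_e (gX X) b \<noteq> None} = {}"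
        proof (rule ccontr)
          assume "{X\<in>J. act_e (gX X) b \<noteq> None} \<noteq> {}"
          then obtain X where X: "X \<in> J" "act_e (gX X) b \<noteq> None" by blast
          have "valid b" "vtx b = r (gX X)" using act_e_dom[OF X(2)] by auto
          moreover have "r (gX X) = ?v0" using D_props(3)[OF YD(1)] gX[OF X(1)] by blast
          ultimately show False using nQ by simp
        qed
      qed
      finally show ?thesis using sumEV rhsv cb by simp
    qed
  qed
  have "finite (supp (fa_diff (fa_sum G J) rhs)) \<and> (\<forall>b c. EV (fa_diff (fa_sum G J) rhs) b c = 0)"
    by (simp add: main finR finS fin_diff ev_diff)
  thus ?thesis unfolding G_def J_def rhs_def .
qed

lemma CL_rels_ok: assumes "q \<in> CL_rels E0 E1 r s Cv Dv S T"
  shows "finite (supp q) \<and> (\<forall>b c. EV q b c = 0)"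
  using assms CL_S_ok CL_T_ok unfolding CL_rels_def by blast

lemma big_ideal_ev: assumes "x \<in> fa_ideal (dbl_alph E0 E1) (path_rels E0 E1 r s \<union> ghost_rels E0 E1 r s \<union> CL_rels E0 E1 r s Cv Dv S T)"
  shows "finite (supp x) \<and> (\<forall>b c. EV x b c = 0)"
  using assms
proof (rule ideal_ev)
  fix q assume "q \<in> path_rels E0 E1 r s \<union> ghost_rels E0 E1 r s \<union> CL_rels E0 E1 r s Cv Dv S T"
  thus "finite (supp q) \<and> (\<forall>b c. EV q b c = 0)" using path_rels_ok ghost_rels_ok CL_rels_ok by blast
qed

end


context bisep begin

section \<open>Normal forms in the path algebra\<close>

definition normal :: "('v,'e) gen list \<Rightarrow> bool" where
  "normal n \<longleftrightarrow> n = [] \<or> (\<exists>v\<in>E0. n = [V v]) \<or> (\<exists>\<alpha>. \<alpha> \<noteq> [] \<and> pathok \<alpha> \<and> n = map Ed \<alpha>)"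

fun nstep :: "('v,'e) gen \<Rightarrow> ('v,'e) gen list \<Rightarrow> ('v,'e) gen list option" where
  "nstep (V v) [] = Some [V v]"
| "nstep (V v) [V w] = (if v = w then Some [V v] else None)"
| "nstep (V v) (Ed a # rest) = (if v = s a then Some (Ed a # rest) else None)"
| "nstep (Ed e) [] = Some [Ed e]"
| "nstep (Ed e) [V w] = (if r e = w then Some [Ed e] else None)"
| "nstep (Ed e) (Ed a # rest) = (if r e = s a then Some (Ed e # Ed a # rest) else None)"
| "nstep _ _ = None"

fun nfw :: "('v,'e) gen list \<Rightarrow> ('v,'e) gen list option" where
  "nfw [] = Some []"
| "nfw (x # w) = (case nfw w of None \<Rightarrow> None | Some n \<Rightarrow> nstep x n)"

definition nfp :: "('v,'e) gen list \<Rightarrow> ('v,'e) gen list \<Rightarrow> 'k::field" where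
  "nfp w = (case nfw w of None \<Rightarrow> fa_zero | Some n \<Rightarrow> fa_mono n)"

lemma pathok_Cons: "pathok (e # \<alpha>) \<longleftrightarrow> e \<in> E1 \<and> pathok \<alpha> \<and> (\<alpha> \<noteq> [] \<longrightarrow> r e = s (hd \<alpha>))"
proof
  assume a: "pathok (e # \<alpha>)"
  have "\<forall>i. Suc i < length \<alpha> \<longrightarrow> r (\<alpha>!i) = s (\<alpha>!Suc i)"
  proof (intro allI impI)
    fix i assume "Suc i < length \<alpha>"
    thus "r (\<alpha>!i) = s (\<alpha>!Suc i)" using a unfolding pathok_def
      by (metis Suc_less_eq length_Cons nth_Cons_Suc)
  qed
  moreover have "\<alpha> \<noteq> [] \<longrightarrow> r e = s (hd \<alpha>)" using a unfolding pathok_def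
    by (metis hd_conv_nth length_Cons length_greater_0_conv nth_Cons_0 nth_Cons_Suc Suc_less_eq)
  ultimately show "e \<in> E1 \<and> pathok \<alpha> \<and> (\<alpha> \<noteq> [] \<longrightarrow> r e = s (hd \<alpha>))" using a unfolding pathok_def by simp
next
  assume a: "e \<in> E1 \<and> pathok \<alpha> \<and> (\<alpha> \<noteq> [] \<longrightarrow> r e = s (hd \<alpha>))"
  have "\<forall>i. Suc i < length (e # \<alpha>) \<longrightarrow> r ((e # \<alpha>)!i) = s ((e # \<alpha>)!Suc i)"
  proof (intro allI impI)
    fix i assume i: "Suc i < length (e # \<alpha>)"
    show "r ((e # \<alpha>)!i) = s ((e # \<alpha>)!Suc i)"
    proof (cases i)
      case 0 thus ?thesis using a i by (auto simp: hd_conv_nth)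
    next
      case (Suc k) thus ?thesis using a i unfolding pathok_def by simp
    qed
  qed
  thus "pathok (e # \<alpha>)" using a unfolding pathok_def by simp
qed

lemma path_alph_cases: "x \<in> path_alph E0 E1 \<Longrightarrow> (\<And>v. v \<in> E0 \<Longrightarrow> x = V v \<Longrightarrow> thesis) \<Longrightarrow> (\<And>e. e \<in> E1 \<Longrightarrow> x = Ed e \<Longrightarrow> thesis) \<Longrightarrow> thesis"
  unfolding path_alph_def by blast

lemma normal_cases: assumes "normal n"
  obtains "n = []" | v where "v \<in> E0" "n = [V v]" | a \<alpha> where "pathok (a # \<alpha>)" "n = Ed a # map Ed \<alpha>"
  using assms unfolding normal_def by (metis list.exhaust list.simps(9))

lemma nf_normal: "w \<in> lists (path_alph E0 E1) \<Longrightarrow> nfw w = Some n \<Longrightarrow> normal n"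
proof (induction w arbitrary: n)
  case Nil thus ?case by (simp add: normal_def)
next
  case (Cons x w)
  obtain n' where n': "nfw w = Some n'" "nstep x n' = Some n" using Cons.prems by (auto split: option.splits)
  have nn': "normal n'" using Cons.IH n'(1) Cons.prems(1) by simp
  from Cons.prems(1) have xA: "x \<in> path_alph E0 E1" by simp
  show ?case
  proof (rule path_alph_cases[OF xA])
    fix v assume v: "v \<in> E0" "x = V v"
    show ?thesis
    proof (rule normal_cases[OF nn'])
      assume "n' = []" thus ?thesis using n' v by (auto simp: normal_def)
    next
      fix w' assume "n' = [V w']" thus ?thesis using n' v by (auto simp: normal_def split: if_splits)
    next
      fix a \<alpha> assume "pathok (a # \<alpha>)" "n' = Ed a # map Ed \<alpha>"
      thus ?thesis using n' v nn' by (auto split: if_splits)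
    qed
  next
    fix e assume e: "e \<in> E1" "x = Ed e"
    show ?thesis
    proof (rule normal_cases[OF nn'])
      assume "n' = []" thus ?thesis using n' e unfolding normal_def
        by (auto intro!: exI[of _ "[e]"] simp: pathok_def)
    next
      fix w' assume "n' = [V w']" thus ?thesis using n' e unfolding normal_def
        by (auto split: if_splits intro!: exI[of _ "[e]"] simp: pathok_def)
    next
      fix a \<alpha> assume a: "pathok (a # \<alpha>)" "n' = Ed a # map Ed \<alpha>"
      hence "n = Ed e # Ed a # map Ed \<alpha>" "r e = s a" using n' e by (auto split: if_splits)
      moreover have "pathok (e # a # \<alpha>)" using a(1) e(1) \<open>r e = s a\<close> pathok_Cons by simp
      ultimately show ?thesis unfolding normal_def by (intro disjI2 exI[of _ "e # a # \<alpha>"]) simp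
    qed
  qed
qed


abbreviation "PA \<equiv> path_alph E0 E1"
abbreviation "PR \<equiv> path_rels E0 E1 r s"

lemma rel_vv: "v \<in> E0 \<Longrightarrow> w \<in> E0 \<Longrightarrow>
  fa_diff (fa_mono [V v, V w]) (if v = w then fa_mono [V v] else fa_zero) \<in> (PR :: (_ \<Rightarrow> 'k::field) set)"
  unfolding path_rels_def gen_mono mono_mult by (intro UnI1) auto

lemma rel_se: "e \<in> E1 \<Longrightarrow> fa_diff (fa_mono [V (s e), Ed e]) (fa_mono [Ed e]) \<in> (PR :: (_ \<Rightarrow> 'k::field) set)"
  unfolding path_rels_def gen_mono mono_mult by auto

lemma rel_er: "e \<in> E1 \<Longrightarrow> fa_diff (fa_mono [Ed e, V (r e)]) (fa_mono [Ed e]) \<in> (PR :: (_ \<Rightarrow> 'k::field) set)"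
  unfolding path_rels_def gen_mono mono_mult by auto

lemma rel_vv_eq: "v \<in> E0 \<Longrightarrow> fa_diff (fa_mono [V v, V v]) (fa_mono [V v]) \<in> (PR :: (_ \<Rightarrow> 'k::field) set)"
  using rel_vv[of v v] by simp

lemma rel_vv_ne: "v \<in> E0 \<Longrightarrow> w \<in> E0 \<Longrightarrow> v \<noteq> w \<Longrightarrow> fa_diff (fa_mono [V v, V w]) fa_zero \<in> (PR :: (_ \<Rightarrow> 'k::field) set)"
  using rel_vv[of v w] by simp

lemma PA_V: "v \<in> E0 \<Longrightarrow> V v \<in> PA" by (simp add: path_alph_def)
lemma PA_Ed: "e \<in> E1 \<Longrightarrow> Ed e \<in> PA" by (simp add: path_alph_def)
lemma PA_map: "set \<alpha> \<subseteq> E1 \<Longrightarrow> map Ed \<alpha> \<in> lists PA" by (induction \<alpha>) (auto simp: path_alph_def)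

lemma step_eqv: assumes "normal n" "x \<in> PA"
  shows "eqv PA (PR :: (_ \<Rightarrow> 'k::field) set) (fa_mono (x # n)) (case nstep x n of None \<Rightarrow> fa_zero | Some m \<Rightarrow> fa_mono m)"
proof (rule path_alph_cases[OF assms(2)])
  fix v assume v: "v \<in> E0" "x = V v"
  show ?thesis
  proof (rule normal_cases[OF assms(1)])
    assume "n = []" thus ?thesis using v by (simp add: eqv_refl)
  next
    fix w assume w: "w \<in> E0" "n = [V w]"
    show ?thesis
    proof (cases "v = w")
      case True
      have "eqv PA PR (fa_mono ([] @ [V v, V v] @ [])) (fa_mono ([] @ [V v] @ [])::_ \<Rightarrow> 'k)"
        by (rule eqv_rel[OF rel_vv_eq[OF v(1)]]) simp_all
      thus ?thesis using True v w by simp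
    next
      case False
      have "eqv PA PR (fa_mono ([] @ [V v, V w] @ [])) (fa_zero::_ \<Rightarrow> 'k)"
        by (rule eqv_rel0[OF rel_vv_ne[OF v(1) w(1) False]]) simp_all
      thus ?thesis using False v w by simp
    qed
  next
    fix a \<alpha> assume a: "pathok (a # \<alpha>)" "n = Ed a # map Ed \<alpha>"
    have aE: "a \<in> E1" and rest: "map Ed \<alpha> \<in> lists PA" using a(1) PA_map unfolding pathok_def by auto
    have saE: "s a \<in> E0" using graph aE by blast
    have r1: "eqv PA PR (fa_mono ([] @ [V (s a), Ed a] @ map Ed \<alpha>)) (fa_mono ([] @ [Ed a] @ map Ed \<alpha>)::_ \<Rightarrow> 'k)"
      by (rule eqv_rel[OF rel_se[OF aE]]) (simp_all add: rest)
    show ?thesis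
    proof (cases "v = s a")
      case True thus ?thesis using r1 v a by simp
    next
      case False
      have r2: "eqv PA PR (fa_mono ([V v] @ [V (s a), Ed a] @ map Ed \<alpha>)) (fa_mono ([V v] @ [Ed a] @ map Ed \<alpha>)::_ \<Rightarrow> 'k)"
        by (rule eqv_rel[OF rel_se[OF aE]]) (simp_all add: rest PA_V v)
      have r3: "eqv PA PR (fa_mono ([] @ [V v, V (s a)] @ (Ed a # map Ed \<alpha>))) (fa_zero::_ \<Rightarrow> 'k)"
        by (rule eqv_rel0[OF rel_vv_ne[OF v(1) saE False]]) (simp_all add: rest PA_Ed aE)
      have "eqv PA PR (fa_mono (V v # Ed a # map Ed \<alpha>)) (fa_zero::_ \<Rightarrow> 'k)"
        using eqv_trans[OF eqv_sym[OF r2[simplified]] r3[simplified]] by simp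
      thus ?thesis using False v a by simp
    qed
  qed
next
  fix e assume e: "e \<in> E1" "x = Ed e"
  have reE: "r e \<in> E0" using graph e(1) by blast
  show ?thesis
  proof (rule normal_cases[OF assms(1)])
    assume "n = []" thus ?thesis using e by (simp add: eqv_refl)
  next
    fix w assume w: "w \<in> E0" "n = [V w]"
    have r1: "eqv PA PR (fa_mono ([] @ [Ed e, V (r e)] @ [])) (fa_mono ([] @ [Ed e] @ [])::_ \<Rightarrow> 'k)"
      by (rule eqv_rel[OF rel_er[OF e(1)]]) simp_all
    show ?thesis
    proof (cases "r e = w")
      case True thus ?thesis using r1 e w by simp
    next
      case False
      have r2: "eqv PA PR (fa_mono ([] @ [Ed e, V (r e)] @ [V w])) (fa_mono ([] @ [Ed e] @ [V w])::_ \<Rightarrow> 'k)"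
        by (rule eqv_rel[OF rel_er[OF e(1)]]) (simp_all add: PA_V w)
      have r3: "eqv PA PR (fa_mono ([Ed e] @ [V (r e), V w] @ [])) (fa_zero::_ \<Rightarrow> 'k)"
        by (rule eqv_rel0[OF rel_vv_ne[OF reE w(1) False]]) (simp_all add: PA_Ed e)
      have "eqv PA PR (fa_mono [Ed e, V w]) (fa_zero::_ \<Rightarrow> 'k)"
        using eqv_trans[OF eqv_sym[OF r2[simplified]] r3[simplified]] by simp
      thus ?thesis using False e w by simp
    qed
  next
    fix a \<alpha> assume a: "pathok (a # \<alpha>)" "n = Ed a # map Ed \<alpha>"
    have aE: "a \<in> E1" and rest: "map Ed \<alpha> \<in> lists PA" using a(1) PA_map unfolding pathok_def by auto
    have saE: "s a \<in> E0" using graph aE by blast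
    show ?thesis
    proof (cases "r e = s a")
      case True thus ?thesis using e a by (simp add: eqv_refl)
    next
      case False
      have r1: "eqv PA PR (fa_mono ([] @ [Ed e, V (r e)] @ (Ed a # map Ed \<alpha>))) (fa_mono ([] @ [Ed e] @ (Ed a # map Ed \<alpha>))::_ \<Rightarrow> 'k)"
        by (rule eqv_rel[OF rel_er[OF e(1)]]) (simp_all add: rest PA_Ed aE)
      have r2: "eqv PA PR (fa_mono ([Ed e, V (r e)] @ [V (s a), Ed a] @ map Ed \<alpha>)) (fa_mono ([Ed e, V (r e)] @ [Ed a] @ map Ed \<alpha>)::_ \<Rightarrow> 'k)"
        by (rule eqv_rel[OF rel_se[OF aE]]) (simp_all add: rest PA_V PA_Ed e reE)
      have r3: "eqv PA PR (fa_mono ([Ed e] @ [V (r e), V (s a)] @ (Ed a # map Ed \<alpha>))) (fa_zero::_ \<Rightarrow> 'k)"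
        by (rule eqv_rel0[OF rel_vv_ne[OF reE saE False]]) (simp_all add: rest PA_Ed aE e)
      have "eqv PA PR (fa_mono (Ed e # Ed a # map Ed \<alpha>)) (fa_zero::_ \<Rightarrow> 'k)"
        using eqv_trans[OF eqv_sym[OF r1[simplified]] eqv_trans[OF eqv_sym[OF r2[simplified]] r3[simplified]]] by simp
      thus ?thesis using False e a by simp
    qed
  qed
qed

lemma nf_eqv: "w \<in> lists PA \<Longrightarrow> eqv PA (PR :: (_ \<Rightarrow> 'k::field) set) (fa_mono w) (nfp w)"
proof (induction w)
  case Nil thus ?case by (simp add: nfp_def eqv_refl)
next
  case (Cons x w)
  have xA: "x \<in> PA" and wA: "w \<in> lists PA" using Cons.prems by auto
  have e1: "eqv PA PR (ctx [x] (fa_mono w) []) (ctx [x] (nfp w) [] :: _ \<Rightarrow> 'k)"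
    by (rule eqv_ctx[OF Cons.IH[OF wA]]) (simp_all add: xA)
  have e2: "eqv PA PR (ctx [x] (nfp w) []) (nfp (x # w) :: _ \<Rightarrow> 'k)"
  proof (cases "nfw w")
    case None thus ?thesis by (simp add: nfp_def ctx_lin eqv_refl)
  next
    case (Some n)
    have "normal n" using nf_normal[OF wA Some] .
    thus ?thesis using step_eqv[OF _ xA, where 'k='k] Some by (simp add: nfp_def ctx_lin)
  qed
  show ?case using eqv_trans[OF e1 e2] by (simp add: ctx_lin)
qed


fun isUp :: "'e step \<Rightarrow> bool" where "isUp (Up e) = True" | "isUp (Dn e) = False"

fun nU :: "('v,'e) pt \<Rightarrow> nat" where "nU (P v \<beta> j ms) = length (filter isUp ms)" | "nU Junk = 0"
fun nD :: "('v,'e) pt \<Rightarrow> nat" where "nD (P v \<beta> j ms) = length (filter (Not \<circ> isUp) ms)" | "nD Junk = 0"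
fun jj :: "('v,'e) pt \<Rightarrow> nat" where "jj (P v \<beta> j ms) = j" | "jj Junk = 0"
fun seed :: "('v,'e) pt \<Rightarrow> 'v \<times> 'e list" where "seed (P v \<beta> j ms) = (v, \<beta>)" | "seed Junk = undefined"

definition hgt :: "('v,'e) pt \<Rightarrow> int" where "hgt b = int (nU b) - int (nD b) - int (jj b)"

lemma step_e: assumes "act_e e b = Some c"
  shows "seed c = seed b \<and> hgt c = hgt b + 1 \<and> nU c \<ge> nU b \<and> nD c \<le> nD b \<and> b \<noteq> Junk \<and> c \<noteq> Junk"
proof -
  have vb: "valid b" using K1(1)[OF assms] .
  then obtain v \<beta> j ms where b: "b = P v \<beta> j ms" by (cases b) auto
  show ?thesis
  proof (cases "canUp b e")
    case True
    hence "c = P v \<beta> j (Up e # ms)" using assms vb b by (simp add: act_e_def)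
    thus ?thesis using b by (simp add: hgt_def)
  next
    case False
    hence d: "downOf b e = Some c" using assms vb by (simp add: act_e_def)
    show ?thesis
    proof (cases ms)
      case Nil
      hence "0 < j" "c = P v \<beta> (j-1) []" using d b by (auto split: if_splits)
      thus ?thesis using b Nil by (simp add: hgt_def)
    next
      case (Cons m ms')
      then obtain f where m: "m = Dn f" using d b by (cases m) auto
      hence "c = P v \<beta> j ms'" using d b Cons by (auto split: if_splits)
      thus ?thesis using b Cons m by (simp add: hgt_def)
    qed
  qed
qed

lemma act_path: assumes "act (map Ed \<alpha>) b = Some c" "b \<noteq> Junk"
  shows "seed c = seed b \<and> hgt c = hgt b + int (length \<alpha>) \<and> nU c \<ge> nU b \<and> nD c \<le> nD b \<and> c \<noteq> Junk"
  using assms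
proof (induction \<alpha> arbitrary: c)
  case Nil thus ?case by simp
next
  case (Cons e \<alpha>)
  obtain d where d: "act (map Ed \<alpha>) b = Some d" "act_e e d = Some c" using Cons.prems(1) by (auto split: option.splits)
  have "seed d = seed b \<and> hgt d = hgt b + int (length \<alpha>) \<and> nU d \<ge> nU b \<and> nD d \<le> nD b \<and> d \<noteq> Junk"
    using Cons.IH[OF d(1) Cons.prems(2)] .
  thus ?case using step_e[OF d(2)] by auto
qed

lemma act_Junk: "act z Junk = Some c \<Longrightarrow> z = [] \<and> c = Junk"
proof (induction z arbitrary: c)
  case Nil thus ?case by simp
next
  case (Cons x z)
  obtain d where d: "act z Junk = Some d" "act1 x d = Some c" using Cons.prems by (auto split: option.splits)
  have "d = Junk" using Cons.IH[OF d(1)] by simp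
  hence False using d(2) by (cases x) (auto simp: act_e_def act_g_def)
  thus ?case ..
qed

lemma chain_act: assumes "pathok \<beta>" "j \<le> length \<beta>" "k \<le> j"
  shows "act (map Ed (take k (drop (j - k) \<beta>))) (P v \<beta> j []) = Some (P v \<beta> (j - k) [])"
  using assms(3)
proof (induction k)
  case 0 thus ?case by simp
next
  case (Suc k)
  let ?i = "j - Suc k"
  have i: "?i < length \<beta>" "j - k = Suc ?i" using Suc.prems assms(2) by auto
  have dr: "drop ?i \<beta> = \<beta>!?i # drop (Suc ?i) \<beta>" using i(1) by (simp add: Cons_nth_drop_Suc)
  have tk: "take (Suc k) (drop ?i \<beta>) = \<beta>!?i # take k (drop (j - k) \<beta>)"
    unfolding dr i(2) by simp
  have IH: "act (map Ed (take k (drop (j - k) \<beta>))) (P v \<beta> j []) = Some (P v \<beta> (j - k) [])"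
    using Suc by simp
  have vb: "valid (P v \<beta> (Suc ?i) [])" using assms(1) i by simp
  have nc: "\<not> canUp (P v \<beta> (Suc ?i) []) (\<beta>!?i)" using canUp_notcov[of "P v \<beta> (Suc ?i) []" "\<beta>!?i"] i by auto
  have "act_e (\<beta>!?i) (P v \<beta> (Suc ?i) []) = Some (P v \<beta> ?i [])"
    using vb nc i by (simp add: act_e_def)
  thus ?case using IH tk i by simp
qed

lemma chain_uniq: assumes "act (map Ed \<alpha>) (P v \<beta> j []) = Some (P v \<beta> i [])"
  shows "i \<le> j \<and> \<alpha> = take (j - i) (drop i \<beta>)"
  using assms
proof (induction \<alpha> arbitrary: i)
  case Nil thus ?case by simp
next
  case (Cons e \<alpha>)
  obtain d where d: "act (map Ed \<alpha>) (P v \<beta> j []) = Some d" "act_e e d = Some (P v \<beta> i [])"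
    using Cons.prems by (auto split: option.splits)
  have pd: "seed d = (v, \<beta>) \<and> nD d \<le> 0 \<and> d \<noteq> Junk" using act_path[OF d(1)] by simp
  have "nU d \<le> 0" using step_e[OF d(2)] by simp
  then obtain j' where dj: "d = P v \<beta> j' []" using pd by (cases d) (auto simp: filter_empty_conv)
  have vd: "valid d" using K1(1)[OF d(2)] .
  have cu: "\<not> canUp d e" using d(2) vd dj by (auto simp: act_e_def)
  hence "downOf d e = Some (P v \<beta> i [])" using d(2) vd by (simp add: act_e_def)
  hence j': "0 < j'" "j' \<le> length \<beta>" "\<beta>!(j'-1) = e" "i = j' - 1" using dj by (auto split: if_splits)
  have IH: "j' \<le> j \<and> \<alpha> = take (j - j') (drop j' \<beta>)" using Cons.IH d(1) dj by simp
  have "i < length \<beta>" using j' by simp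
  hence dr: "drop i \<beta> = \<beta>!i # drop (Suc i) \<beta>" by (simp add: Cons_nth_drop_Suc)
  have ji: "j' = Suc i" using j' by simp
  have ji2: "j - i = Suc (j - j')" using ji IH by linarith
  have "take (j - i) (drop i \<beta>) = \<beta>!i # take (j - j') (drop j' \<beta>)"
    unfolding dr ji2 ji by simp
  moreover have "i \<le> j" using IH j' by linarith
  moreover have "\<beta>!i = e" using j' by simp
  ultimately show ?case using IH by simp
qed


theorem main_inj:
  fixes p :: "('v,'e) gen list \<Rightarrow> 'k::field"
  assumes pe: "fa_elem PA p"
    and pI: "p \<in> fa_ideal (dbl_alph E0 E1) (PR \<union> ghost_rels E0 E1 r s \<union> CL_rels E0 E1 r s Cv Dv S T)"
  shows "p \<in> fa_ideal PA PR"
proof -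
  define W where "W = {w. p w \<noteq> 0}"
  have finW: "finite W" and WA: "W \<subseteq> lists PA" using pe unfolding fa_elem_def W_def by auto
  define q where "q = fa_sum (\<lambda>w. fa_smult (p w) (nfp w)) W"
  define d where "d = fa_sum (\<lambda>w. fa_smult (p w) (fa_diff (fa_mono w) (nfp w))) W"
  have dI: "d \<in> fa_ideal PA PR" unfolding d_def
  proof (rule ideal_sum[OF finW])
    fix w assume "w \<in> W"
    hence "eqv PA PR (fa_mono w) (nfp w :: _ \<Rightarrow> 'k)" using nf_eqv WA by blast
    thus "fa_smult (p w) (fa_diff (fa_mono w) (nfp w)) \<in> fa_ideal PA PR"
      unfolding eqv_def by (rule fa_ideal.smult)
  qed
  have pdq: "p z = d z + q z" for z
  proof -
    have "d z + q z = (\<Sum>w\<in>W. p w * (fa_mono w z - nfp w z)) + (\<Sum>w\<in>W. p w * nfp w z)"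
      by (simp add: d_def q_def fa_sum_def fa_smult_def fa_diff_def)
    also have "\<dots> = (\<Sum>w\<in>W. p w * fa_mono w z)"
      by (simp add: sum.distrib[symmetric] algebra_simps)
    also have "\<dots> = (\<Sum>w\<in>W. if w = z then p w else 0)"
      by (rule sum.cong) (auto simp: fa_mono_def)
    also have "\<dots> = p z" using finW by (simp add: sum.delta' W_def)
    finally show ?thesis by simp
  qed
  have dbig: "d \<in> fa_ideal (dbl_alph E0 E1) (PR \<union> ghost_rels E0 E1 r s \<union> CL_rels E0 E1 r s Cv Dv S T)"
    by (rule ideal_mono[OF dI]) (auto simp: path_alph_def dbl_alph_def)
  have ep: "finite (supp p) \<and> (\<forall>b c. EV p b c = 0)" by (rule big_ideal_ev[OF pI])
  have ed: "finite (supp d) \<and> (\<forall>b c. EV d b c = 0)" by (rule big_ideal_ev[OF dbig])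
  have qpd: "q = fa_diff p d" using pdq by (auto simp: fa_diff_def)
  have finq: "finite (supp q)" unfolding qpd using ep ed fin_diff by blast
  have evq: "EV q b c = 0" for b c unfolding qpd using ep ed by (simp add: ev_diff)
  have qnorm: "normal z" if qz: "q z \<noteq> 0" for z
  proof -
    have "(\<Sum>w\<in>W. p w * nfp w z) \<noteq> 0" using qz by (simp add: q_def fa_sum_def fa_smult_def)
    then obtain w where w: "w \<in> W" "p w * nfp w z \<noteq> 0" by (meson sum.not_neutral_contains_not_neutral)
    hence "nfp w z \<noteq> (0::'k)" by auto
    then obtain n where n: "nfw w = Some n" "fa_mono n z \<noteq> (0::'k)"
      by (cases "nfw w") (auto simp: nfp_def fa_zero_def)
    hence "n = z" by (auto simp: fa_mono_def split: if_splits)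
    thus ?thesis using nf_normal[OF _ n(1)] WA w(1) by blast
  qed
  have q0: "q [] = 0"
  proof -
    have "EV q Junk Junk = q []"
    proof (rule ev_single)
      show "act [] Junk = Some Junk" by simp
      fix z assume "q z \<noteq> 0" "act z Junk = Some Junk"
      thus "z = []" using act_Junk by blast
    qed
    thus ?thesis using evq by simp
  qed
  have qV: "q [V v] = 0" if v: "v \<in> E0" for v
  proof -
    let ?b = "P v [] 0 [] :: ('v,'e) pt"
    have vb: "valid ?b" by (simp add: pathok_def)
    have "EV q ?b ?b = q [V v]"
    proof (rule ev_single)
      show "act [V v] ?b = Some ?b" using vb by simp
      fix z assume z: "q z \<noteq> 0" "act z ?b = Some ?b"
      show "z = [V v]"
      proof (rule normal_cases[OF qnorm[OF z(1)]])
        assume "z = []" thus ?thesis using z q0 by simp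
      next
        fix w assume "w \<in> E0" "z = [V w]" thus ?thesis using z by (auto split: if_splits)
      next
        fix a \<alpha> assume "pathok (a # \<alpha>)" "z = Ed a # map Ed \<alpha>"
        hence "act (map Ed (a # \<alpha>)) ?b = Some ?b" using z by simp
        from act_path[OF this] have False by simp
        thus ?thesis ..
      qed
    qed
    thus ?thesis using evq by simp
  qed
  have qP: "q (map Ed \<beta>) = 0" if po: "pathok \<beta>" and ne: "\<beta> \<noteq> []" for \<beta>
  proof -
    let ?b = "P undefined \<beta> (length \<beta>) [] :: ('v,'e) pt" and ?c = "P undefined \<beta> 0 [] :: ('v,'e) pt"
    have "EV q ?b ?c = q (map Ed \<beta>)"
    proof (rule ev_single)
      show "act (map Ed \<beta>) ?b = Some ?c" using chain_act[OF po le_refl le_refl] by simp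
      fix z assume z: "q z \<noteq> 0" "act z ?b = Some ?c"
      show "z = map Ed \<beta>"
      proof (rule normal_cases[OF qnorm[OF z(1)]])
        assume "z = []" thus ?thesis using z ne by simp
      next
        fix w assume "w \<in> E0" "z = [V w]"
        hence "act [V w] ?b = Some ?c" using z by simp
        hence "?b = ?c" by (auto split: if_splits)
        thus ?thesis using ne by simp
      next
        fix a \<alpha> assume "pathok (a # \<alpha>)" "z = Ed a # map Ed \<alpha>"
        hence "act (map Ed (a # \<alpha>)) ?b = Some ?c" using z by simp
        from chain_uniq[OF this] have "a # \<alpha> = \<beta>" by simp
        thus ?thesis using \<open>z = Ed a # map Ed \<alpha>\<close> by auto
      qed
    qed
    thus ?thesis using evq by simp
  qed
  have qz: "q z = 0" for z
  proof (rule ccontr)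
    assume nz: "q z \<noteq> 0"
    show False
    proof (rule normal_cases[OF qnorm[OF nz]])
      assume "z = []" thus False using nz q0 by simp
    next
      fix v assume "v \<in> E0" "z = [V v]" thus False using nz qV by simp
    next
      fix a \<alpha> assume "pathok (a # \<alpha>)" "z = Ed a # map Ed \<alpha>"
      thus False using nz qP[of "a # \<alpha>"] by simp
    qed
  qed
  have "p = d" using pdq qz by (auto intro: ext)
  thus ?thesis using dI by simp
qed

end

theorem mainTheorem4:
  fixes E0 :: "'v set" and E1 :: "'e set" and r s :: "'e \<Rightarrow> 'v"
    and Cv Dv :: "'v \<Rightarrow> 'e set set" and S T :: "'e set set"
    and p :: "('v, 'e) gen list \<Rightarrow> 'k::field"
  assumes "is_bisep E0 E1 r s Cv Dv S T"
    and "fa_elem (path_alph E0 E1) p"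
    and "p \<in> fa_ideal (dbl_alph E0 E1)
               (path_rels E0 E1 r s \<union> ghost_rels E0 E1 r s \<union> CL_rels E0 E1 r s Cv Dv S T)"
  shows "p \<in> fa_ideal (path_alph E0 E1) (path_rels E0 E1 r s)"
proof -
  interpret bisep E0 E1 r s Cv Dv S T by unfold_locales (rule assms(1))
  show ?thesis by (rule main_inj[OF assms(2) assms(3)])
qed

end
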